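(* Let $\overline{D};\Delta\vdash e:t\leadsto E$. Let $\sigma_{FG}$ be a substitution of FG values for FG variables, $\sigma_V$ a substitution of TL values for TL variables, and $\sigma_m$ a TL method substitution such that, for some $k$, $\Delta\models_k\sigma_{FG}\approx\sigma_V$ and $\overline{D}\approx_k\sigma_m$ (relations taken w.r.t. $\overline{D}$ and $\sigma_m$). Then $\models_k t:\sigma_{FG}(e)\approx\sigma_V(E)$.
   Context: Featherweight Go (FG). Field names $f$, method names $m$, variables $x$, structure type names $t_S,u_S$, interface type names $t_I,u_I$; types $t,u$ range over both kinds of names. A method signature is $M = (x_1\,t_1,\ldots,x_n\,t_n)\,t$; a method specification is $m M$. Expressions: $e ::= x \mid e.m(e_1,\ldots,e_n) \mid t_S\{e_1,\ldots,e_n\} \mid e.f \mid e.(t)$. Declarations: $\mathtt{type}\ t_S\ \mathtt{struct}\{f_1\,t_1 \ldots f_n\,t_n\}$, $\mathtt{type}\ t_I\ \mathtt{interface}\{S_1 \ldots S_q\}$ ($S_j$ method specifications, in this order), and method declarations $\mathtt{func}\ (x\ t_S)\ m M\ \{\mathtt{return}\ e\}$. It is assumed that structures are non-recursive, field names within a struct are distinct, method names within an interface are distinct, and each method declaration is uniquely identified by receiver type and method name. $\mathrm{methods}(\overline{D},t_S)=\{mM \mid \mathtt{func}\ (x\ t_S)\ mM\{\ldots\}\in\overline{D}\}$; $\mathrm{methods}(\overline{D},t_I)$ is the set of specifications of the declaration of $t_I$. Subtyping: $t_S <: t_S$, and $t <: u_I$ iff $\mathrm{methods}(\overline{D},t)\supseteq\mathrm{methods}(\overline{D},u_I)$.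 $\mathrm{methodLookup}(\overline{D},(m,t_S))$ is the unique declaration $\mathtt{func}\ (x\ t_S)\ mM\{\ldots\}\in\overline{D}$. FG values $v ::= t_S\{v_1,\ldots,v_n\}$. Reduction $\overline{D}\vdash d\longrightarrow e$ is closed under evaluation contexts $\mathcal{E} ::= [\,] \mid t_S\{\overline{v},\mathcal{E},\overline{e}\} \mid \mathcal{E}.f \mid \mathcal{E}.(t) \mid \mathcal{E}.m(\overline{e}) \mid v.m(\overline{v},\mathcal{E},\overline{e})$, with rules $t_S\{v_1..v_n\}.f_i \longrightarrow v_i$; $v.m(v_1..v_n)\longrightarrow [x\mapsto v, x_i\mapsto v_i]e$ if $v=t_S\{\ldots\}$ and $\mathtt{func}\ (x\ t_S)\ m(x_1\,t_1..x_n\,t_n)\,t\{\mathtt{return}\ e\}\in\overline{D}$; $v.(t)\longrightarrow v$ if $v=t_S\{\ldots\}$ and $t_S<:t$. $\overline{D}\vdash e\longrightarrow^{\le k} v$ means $e$ reduces to value $v$ in at most $k$ steps. Target language (TL): $E ::= X \mid K \mid E\,E \mid \lambda X.E \mid \mathtt{case}\ E\ \mathtt{of}\ [Pat_1\to E_1,\ldots]$, $Pat ::= K\,X_1\ldots X_n$, with tuple constructors $(E_1,\ldots,E_n)$; $\lambda Pat.E$ abbreviates $\lambda X.\mathtt{case}\ X\ \mathtt{of}\ [Pat\to E]$ ($X$ fresh) and nested patterns abbreviate nested case expressions. TL values $V ::= X \mid K\,V_1\ldots V_n$. Given a method substitution $\sigma_m$ (finite map from variables $Y$ to $\lambda$-abstractions),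 reduction $\sigma_m\vdash E\longrightarrow E'$ is closed under contexts $R ::= [\,]\mid K\,\overline{V}\,R\,\overline{E}\mid \mathtt{case}\ R\ \mathtt{of}\ [\ldots]\mid R\,E\mid V\,R$ with rules $(\lambda X.E)\,V\longrightarrow[X\mapsto V]E$; $\mathtt{case}\ K\,V_1..V_n\ \mathtt{of}\ [\ldots]\longrightarrow[X_i\mapsto V_i]E'$ if $K\,X_1..X_n\to E'$ is a clause; $Y\,E\longrightarrow\sigma_m(Y)\,E$. $\sigma_m\vdash E\longrightarrow^{\le k}V$ analogously. Translation. FG variable $x$ becomes TL variable $X$; each struct $t_S$ gets constructor $K_{t_S}$, each interface $t_I$ constructor $K_{t_I}$; the method declaration of $m$ for receiver $t_S$ gets TL variable $m_{t_S}$. $\Delta$ is a finite map from FG variables to types. Rules for $\overline{D};\Delta\vdash e:t\leadsto E$: (var) $(x:t)\in\Delta$ gives $x:t\leadsto X$. (struct) $\mathtt{type}\ t_S\ \mathtt{struct}\{f_1t_1..f_nt_n\}\in\overline{D}$ and $e_i:t_i\leadsto E_i$ give $t_S\{e_1..e_n\}:t_S\leadsto K_{t_S}(E_1,\ldots,E_n)$. (access) $e:t_S\leadsto E$ with that struct gives $e.f_i:t_i\leadsto \mathtt{case}\ E\ \mathtt{of}\ K_{t_S}(X_1,..,X_n)\to X_i$. (call-struct) $m(x_1t_1..x_nt_n)t\in\mathrm{methods}(\overline{D},t_S)$, $e:t_S\leadsto E$, $e_i:t_i\leadsto E_i$ give $e.m(e_1..e_n):t\leadsto m_{t_S}\,E\,(E_1,..,E_n)$.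 (call-iface) $e:t_I\leadsto E$, $\mathtt{type}\ t_I\ \mathtt{interface}\{S_1..S_q\}\in\overline{D}$, $S_j=m(x_1t_1..x_nt_n)t$, $e_i:t_i\leadsto E_i$, $X,X_1..X_q$ fresh give $e.m(e_1..e_n):t\leadsto\mathtt{case}\ E\ \mathtt{of}\ K_{t_I}(X,X_1,..,X_q)\to X_j\,X\,(E_1,..,E_n)$. (sub) $e:t\leadsto E_2$ and $\overline{D}\vdash t<:u\leadsto E_1$ give $e:u\leadsto E_1\,E_2$. (assert) $e:t_I\leadsto E_2$ and $\overline{D}\vdash t_I\triangleright u\leadsto E_1$ give $e.(u):u\leadsto E_1\,E_2$. Interface-value construction: if $\mathtt{type}\ t_I\ \mathtt{interface}\{m_1M_1..m_nM_n\}\in\overline{D}$ and $\mathrm{methods}(\overline{D},t_S)\supseteq\{m_iM_i\}$ then $\overline{D}\vdash t_S<:t_I\leadsto\lambda X.K_{t_I}(X,m_{1,t_S},\ldots,m_{n,t_S})$; if $\mathtt{type}\ t_I\ \mathtt{interface}\{R_1..R_n\}$, $\mathtt{type}\ u_I\ \mathtt{interface}\{S_1..S_q\}\in\overline{D}$ and $\pi:\{1..q\}\to\{1..n\}$ with $S_i=R_{\pi(i)}$, then $\overline{D}\vdash t_I<:u_I\leadsto\lambda X.\mathtt{case}\ X\ \mathtt{of}\ K_{t_I}(X,X_1,..,X_n)\to K_{u_I}(X,X_{\pi(1)},..,X_{\pi(q)})$. Interface-value destruction: if $\mathtt{type}\ t_I\ \mathtt{interface}\{R_1..R_n\}\in\overline{D}$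 and $t_S<:t_I$ then $\overline{D}\vdash t_I\triangleright t_S\leadsto\lambda X.\mathtt{case}\ X\ \mathtt{of}\ K_{t_I}(K_{t_S}\,Y,X_1,..,X_n)\to K_{t_S}\,Y$; and $\overline{D}\vdash t_I\triangleright u_I\leadsto\lambda X.\mathtt{case}\ X\ \mathtt{of}\ K_{t_I}(Y,X_1,..,X_n)\to\mathtt{case}\ Y\ \mathtt{of}\ [Cls_1,\ldots]$, where for each struct declaration $t_{Sj}$ in $\overline{D}$ with $\overline{D}\vdash t_{Sj}<:u_I\leadsto E_j$ there is a clause $Cls_j = K_{t_{Sj}}\,Y'\to E_j\,(K_{t_{Sj}}\,Y')$. Step-indexed logical relation (relative to fixed $\overline{D}$ and $\sigma_m$), defined by the rules: (Exp) $\models_k t: e\approx E$ holds if for all $k_1<k$, $k_2<k$, FG values $v$ and TL values $V$ with $k-k_1-k_2>0$, $\overline{D}\vdash e\longrightarrow^{\le k_1}v$ and $\sigma_m\vdash E\longrightarrow^{\le k_2}V$, we have $\models_{k-k_1-k_2} t: v\approx V$. (Struct) $\models_k t_S: t_S\{v_1..v_n\}\approx K_{t_S}(V_1,..,V_n)$ holds if $\mathtt{type}\ t_S\ \mathtt{struct}\{f_1t_1..f_nt_n\}\in\overline{D}$ and $\models_k t_i: v_i\approx V_i$ for all $i$. (Iface) $\models_k t_I: v\approx K_{t_I}(V,V_1,..,V_n)$ holds if $V=K_{u_S}\,\overline{V'}$ for some struct $u_S$, $\models_{k_1}u_S: v\approx V$ for all $k_1<k$, $\mathrm{methods}(\overline{D},t_I)=\{m_1M_1,..,m_nM_n\}$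 (in declaration order), and for all $k_2<k$ and $i$, $\models_{k_2} m_iM_i:\mathrm{methodLookup}(\overline{D},(m_i,u_S))\approx V_i$. (Method) $\models_k m(x_1t_1..x_nt_n)t:\mathtt{func}\ (x\ t_S)\ m(x_1t_1..x_nt_n)t\{\mathtt{return}\ e\}\approx V$ holds if for all $k'\le k$ and $v',V',v_i,V_i$ with $\models_{k'}t_S:v'\approx V'$ and $\models_{k'}t_i:v_i\approx V_i$ for all $i$, we have $\models_{k'}t:[x\mapsto v',x_i\mapsto v_i]e\approx(V\,V')\,(V_1,..,V_n)$. (Bindings) $\Delta\models_k\sigma_{FG}\approx\sigma_V$ iff $\models_k t:\sigma_{FG}(x)\approx\sigma_V(X)$ for all $(x:t)\in\Delta$. (Decls) $\overline{D}\approx_k\sigma_m$ iff for every $\mathtt{func}\ (x\ t_S)\ mM\{\mathtt{return}\ e\}\in\overline{D}$, $\models_k mM:\mathtt{func}\ (x\ t_S)\ mM\{\mathtt{return}\ e\}\approx m_{t_S}$ (the TL variable). *)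

theory Defs
  imports Main
begin

section \<open>Featherweight Go (FG)\<close>

type_synonym vname = string
type_synonym fname = string
type_synonym mname = string
type_synonym sname = string
type_synonym iname = string

datatype ty = TS sname | TI iname

type_synonym sig = "(vname \<times> ty) list \<times> ty"   (* (x1 t1 .. xn tn) t *)
type_synonym spec = "mname \<times> sig"

datatype fexp =
    Var vname
  | Call fexp mname "fexp list"
  | SLit sname "fexp list"
  | Field fexp fname
  | Assert fexp ty

datatype decl =
    TypeStruct sname "(fname \<times> ty) list"
  | TypeIface iname "spec list"
  | Func vname sname mname sig fexp   (* func (x tS) m M {return e} *)

type_synonym decls = "decl list"

definition upds :: "('a \<Rightarrow> 'b) \<Rightarrow> 'a list \<Rightarrow> 'b list \<Rightarrow> 'a \<Rightarrow> 'b" where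
  "upds \<sigma> xs vs = foldl (\<lambda>\<sigma>' (x, v). \<sigma>'(x := v)) \<sigma> (zip xs vs)"

fun methods :: "decls \<Rightarrow> ty \<Rightarrow> spec set" where
  "methods D (TS s) = {(m, M). \<exists>x e. Func x s m M e \<in> set D}"
| "methods D (TI t) = {S. \<exists>Ss. TypeIface t Ss \<in> set D \<and> S \<in> set Ss}"

definition subtype :: "decls \<Rightarrow> ty \<Rightarrow> ty \<Rightarrow> bool" where
  "subtype D t u \<longleftrightarrow> (\<exists>s. t = TS s \<and> u = TS s) \<or> (\<exists>uI. u = TI uI \<and> methods D u \<subseteq> methods D t)"

definition method_lookup :: "decls \<Rightarrow> mname \<Rightarrow> sname \<Rightarrow> decl \<Rightarrow> bool" where
  "method_lookup D m s d \<longleftrightarrow> d \<in> set D \<and> (\<exists>x M e. d = Func x s m M e)"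

definition struct_dep :: "decls \<Rightarrow> (sname \<times> sname) set" where
  "struct_dep D = {(s, s'). \<exists>fs f. TypeStruct s fs \<in> set D \<and> (f, TS s') \<in> set fs}"

definition struct_names :: "decls \<Rightarrow> sname list" where
  "struct_names D = concat (map (\<lambda>d. case d of TypeStruct s fs \<Rightarrow> [s] | _ \<Rightarrow> []) D)"

definition iface_names :: "decls \<Rightarrow> iname list" where
  "iface_names D = concat (map (\<lambda>d. case d of TypeIface t Ss \<Rightarrow> [t] | _ \<Rightarrow> []) D)"

definition func_keys :: "decls \<Rightarrow> (sname \<times> mname) list" where
  "func_keys D = concat (map (\<lambda>d. case d of Func x s m M e \<Rightarrow> [(s, m)] | _ \<Rightarrow> []) D)"

definition wf_decls :: "decls \<Rightarrow> bool" where
  "wf_decls D \<longleftrightarrow>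
     acyclic (struct_dep D)
   \<and> (\<forall>s fs. TypeStruct s fs \<in> set D \<longrightarrow> distinct (map fst fs))
   \<and> (\<forall>t Ss. TypeIface t Ss \<in> set D \<longrightarrow> distinct (map fst Ss))
   \<and> distinct (func_keys D)
   \<and> distinct (struct_names D)
   \<and> distinct (iface_names D)"

fun fval :: "fexp \<Rightarrow> bool" where
  "fval (SLit s es) = list_all fval es"
| "fval _ = False"

fun fsubst :: "(vname \<Rightarrow> fexp) \<Rightarrow> fexp \<Rightarrow> fexp" where
  "fsubst \<sigma> (Var x) = \<sigma> x"
| "fsubst \<sigma> (Call e m es) = Call (fsubst \<sigma> e) m (map (fsubst \<sigma>) es)"
| "fsubst \<sigma> (SLit s es) = SLit s (map (fsubst \<sigma>) es)"
| "fsubst \<sigma> (Field e f) = Field (fsubst \<sigma> e) f"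
| "fsubst \<sigma> (Assert e t) = Assert (fsubst \<sigma> e) t"

inductive fstep :: "decls \<Rightarrow> fexp \<Rightarrow> fexp \<Rightarrow> bool" for D where
  field: "\<lbrakk> TypeStruct s fs \<in> set D; list_all fval vs; length vs = length fs;
            i < length fs; fst (fs ! i) = f \<rbrakk>
          \<Longrightarrow> fstep D (Field (SLit s vs) f) (vs ! i)"
| call: "\<lbrakk> list_all fval vs0; list_all fval vs; Func x s m (ps, t) e \<in> set D;
           length vs = length ps \<rbrakk>
         \<Longrightarrow> fstep D (Call (SLit s vs0) m vs)
               (fsubst (upds (Var(x := SLit s vs0)) (map fst ps) vs) e)"
| assert: "\<lbrakk> list_all fval vs0; subtype D (TS s) t \<rbrakk>
           \<Longrightarrow> fstep D (Assert (SLit s vs0) t) (SLit s vs0)"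
| ctx_lit: "\<lbrakk> list_all fval vs; fstep D e e' \<rbrakk>
            \<Longrightarrow> fstep D (SLit s (vs @ e # es)) (SLit s (vs @ e' # es))"
| ctx_field: "fstep D e e' \<Longrightarrow> fstep D (Field e f) (Field e' f)"
| ctx_assert: "fstep D e e' \<Longrightarrow> fstep D (Assert e t) (Assert e' t)"
| ctx_recv: "fstep D e e' \<Longrightarrow> fstep D (Call e m es) (Call e' m es)"
| ctx_arg: "\<lbrakk> fval v; list_all fval vs; fstep D e e' \<rbrakk>
            \<Longrightarrow> fstep D (Call v m (vs @ e # es)) (Call v m (vs @ e' # es))"

definition fsteps_le :: "decls \<Rightarrow> nat \<Rightarrow> fexp \<Rightarrow> fexp \<Rightarrow> bool" where
  "fsteps_le D k e v \<longleftrightarrow> fval v \<and> (\<exists>j\<le>k. (fstep D ^^ j) e v)"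

section \<open>Target language (TL)\<close>

datatype con = KS sname | KI iname | KTup nat

text \<open>Ordinary (bindable) TL variables: translated FG variables and auxiliary ones.
  Method variables \<open>m_{t_S}\<close> form a separate sort \<open>TMeth m t_S\<close>.\<close>
datatype tlvar = VX vname | VAux nat

datatype texp =
    TVar tlvar
  | TMeth mname sname
  | TCon con
  | TApp texp texp
  | TLam tlvar texp
  | TCase texp "((con \<times> tlvar list) \<times> texp) list"

type_synonym msub = "(mname \<times> sname) \<rightharpoonup> texp"

definition capp :: "con \<Rightarrow> texp list \<Rightarrow> texp" where
  "capp K Es = foldl TApp (TCon K) Es"

definition tuple :: "texp list \<Rightarrow> texp" where
  "tuple Es = capp (KTup (length Es)) Es"

fun is_tvar :: "texp \<Rightarrow> bool" where
  "is_tvar (TVar _) = True"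
| "is_tvar (TMeth _ _) = True"
| "is_tvar _ = False"

fun cval :: "texp \<Rightarrow> bool" where
  "cval (TCon _) = True"
| "cval (TApp f a) = (cval f \<and> (is_tvar a \<or> cval a))"
| "cval _ = False"

definition tval :: "texp \<Rightarrow> bool" where
  "tval e \<longleftrightarrow> is_tvar e \<or> cval e"

fun fv :: "texp \<Rightarrow> tlvar set" where
  "fv (TVar x) = {x}"
| "fv (TMeth m s) = {}"
| "fv (TCon K) = {}"
| "fv (TApp a b) = fv a \<union> fv b"
| "fv (TLam x e) = fv e - {x}"
| "fv (TCase e cls) = fv e \<union> \<Union> (set (map (\<lambda>c. fv (snd c) - set (snd (fst c))) cls))"

definition fresh :: "tlvar set \<Rightarrow> tlvar" where
  "fresh A = VAux (LEAST n. VAux n \<notin> A)"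

fun ren :: "tlvar set \<Rightarrow> tlvar list \<Rightarrow> tlvar list" where
  "ren A [] = []"
| "ren A (x # xs) = (let x' = (if x \<in> A then fresh A else x) in x' # ren (insert x' A) xs)"

fun tsubst :: "(tlvar \<Rightarrow> texp) \<Rightarrow> texp \<Rightarrow> texp" where
  "tsubst \<sigma> (TVar x) = \<sigma> x"
| "tsubst \<sigma> (TMeth m s) = TMeth m s"
| "tsubst \<sigma> (TCon K) = TCon K"
| "tsubst \<sigma> (TApp a b) = TApp (tsubst \<sigma> a) (tsubst \<sigma> b)"
| "tsubst \<sigma> (TLam x e) =
     (let A = \<Union> (fv ` \<sigma> ` (fv e - {x}));
          x' = (if x \<in> A then fresh A else x)
      in TLam x' (tsubst (\<sigma>(x := TVar x')) e))"
| "tsubst \<sigma> (TCase e cls) =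
     TCase (tsubst \<sigma> e)
       (map (\<lambda>c.
          (let xs = snd (fst c);
               A = \<Union> (fv ` \<sigma> ` (fv (snd c) - set xs));
               xs' = ren A xs
           in ((fst (fst c), xs'), tsubst (upds \<sigma> xs (map TVar xs')) (snd c)))) cls)"

inductive tstep :: "msub \<Rightarrow> texp \<Rightarrow> texp \<Rightarrow> bool" for \<sigma>m where
  beta: "tval V \<Longrightarrow> tstep \<sigma>m (TApp (TLam x E) V) (tsubst (TVar(x := V)) E)"
| case_red: "\<lbrakk> list_all tval Vs; ((K, xs), E') \<in> set cls; length xs = length Vs \<rbrakk>
             \<Longrightarrow> tstep \<sigma>m (TCase (capp K Vs) cls) (tsubst (upds TVar xs Vs) E')"
| meth: "\<sigma>m (m, s) = Some L \<Longrightarrow> tstep \<sigma>m (TApp (TMeth m s) E) (TApp L E)"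
| ctx_appL: "tstep \<sigma>m E1 E1' \<Longrightarrow> tstep \<sigma>m (TApp E1 E2) (TApp E1' E2)"
| ctx_appR: "\<lbrakk> tval V; tstep \<sigma>m E E' \<rbrakk> \<Longrightarrow> tstep \<sigma>m (TApp V E) (TApp V E')"
| ctx_case: "tstep \<sigma>m E E' \<Longrightarrow> tstep \<sigma>m (TCase E cls) (TCase E' cls)"

definition tsteps_le :: "msub \<Rightarrow> nat \<Rightarrow> texp \<Rightarrow> texp \<Rightarrow> bool" where
  "tsteps_le \<sigma>m k E V \<longleftrightarrow> tval V \<and> (\<exists>j\<le>k. (tstep \<sigma>m ^^ j) E V)"

definition method_subst :: "msub \<Rightarrow> bool" where
  "method_subst \<sigma>m \<longleftrightarrow> finite (dom \<sigma>m) \<and> (\<forall>Y L. \<sigma>m Y = Some L \<longrightarrow> (\<exists>x b. L = TLam x b))"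

section \<open>Translation\<close>

text \<open>Nested pattern \<open>case E of K(X1,..,Xn) \<rightarrow> body\<close>, i.e.
  \<open>case E of [K Z \<rightarrow> case Z of [(X1,..,Xn) \<rightarrow> body]]\<close> with \<open>Z = VAux 0\<close>.
  All auxiliary binders are \<open>VAux\<close> variables; these never occur free in
  translations, so they are fresh.\<close>
definition case_tup :: "texp \<Rightarrow> con \<Rightarrow> tlvar list \<Rightarrow> texp \<Rightarrow> texp" where
  "case_tup E K xs body =
     TCase E [((K, [VAux 0]), TCase (TVar (VAux 0)) [((KTup (length xs), xs), body)])]"

inductive subty_tr :: "decls \<Rightarrow> ty \<Rightarrow> ty \<Rightarrow> texp \<Rightarrow> bool" for D where
  struct_iface: "\<lbrakk> TypeIface tI Ss \<in> set D; set Ss \<subseteq> methods D (TS s) \<rbrakk>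
     \<Longrightarrow> subty_tr D (TS s) (TI tI)
           (TLam (VAux 0) (TApp (TCon (KI tI))
              (tuple (TVar (VAux 0) # map (\<lambda>(m, M). TMeth m s) Ss))))"
| iface_iface: "\<lbrakk> TypeIface tI Rs \<in> set D; TypeIface uI Ss \<in> set D;
                  \<forall>i < length Ss. \<pi> i < length Rs \<and> Ss ! i = Rs ! (\<pi> i) \<rbrakk>
     \<Longrightarrow> subty_tr D (TI tI) (TI uI)
           (TLam (VAux 0) (case_tup (TVar (VAux 0)) (KI tI) (map VAux [1..<length Rs + 2])
              (TApp (TCon (KI uI))
                 (tuple (TVar (VAux 1) # map (\<lambda>i. TVar (VAux (\<pi> i + 2))) [0..<length Ss])))))"

definition structs_sub :: "decls \<Rightarrow> iname \<Rightarrow> sname list" where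
  "structs_sub D uI = concat (map (\<lambda>d. case d of
       TypeStruct s fs \<Rightarrow> (if \<exists>E. subty_tr D (TS s) (TI uI) E then [s] else [])
     | _ \<Rightarrow> []) D)"

inductive destr_tr :: "decls \<Rightarrow> iname \<Rightarrow> ty \<Rightarrow> texp \<Rightarrow> bool" for D where
  to_struct: "\<lbrakk> TypeIface tI Rs \<in> set D; subtype D (TS s) (TI tI) \<rbrakk>
     \<Longrightarrow> destr_tr D tI (TS s)
           (TLam (VAux 0) (case_tup (TVar (VAux 0)) (KI tI) (map VAux [1..<length Rs + 2])
              (TCase (TVar (VAux 1))
                 [((KS s, [VAux (length Rs + 2)]),
                   TApp (TCon (KS s)) (TVar (VAux (length Rs + 2))))])))"
| to_iface: "\<lbrakk> TypeIface tI Rs \<in> set D;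
               list_all2 (\<lambda>s cl. \<exists>Ej. subty_tr D (TS s) (TI uI) Ej \<and>
                    cl = ((KS s, [VAux (length Rs + 2)]),
                          TApp Ej (TApp (TCon (KS s)) (TVar (VAux (length Rs + 2))))))
                 (structs_sub D uI) cls \<rbrakk>
     \<Longrightarrow> destr_tr D tI (TI uI)
           (TLam (VAux 0) (case_tup (TVar (VAux 0)) (KI tI) (map VAux [1..<length Rs + 2])
              (TCase (TVar (VAux 1)) cls)))"

inductive fg_trans :: "decls \<Rightarrow> (vname \<rightharpoonup> ty) \<Rightarrow> fexp \<Rightarrow> ty \<Rightarrow> texp \<Rightarrow> bool"
  for D \<Delta> where
  tr_var: "\<Delta> x = Some t \<Longrightarrow> fg_trans D \<Delta> (Var x) t (TVar (VX x))"
| tr_struct: "\<lbrakk> TypeStruct s fs \<in> set D; length es = length fs; length Es = length fs;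
                \<forall>i < length fs. fg_trans D \<Delta> (es ! i) (snd (fs ! i)) (Es ! i) \<rbrakk>
     \<Longrightarrow> fg_trans D \<Delta> (SLit s es) (TS s) (TApp (TCon (KS s)) (tuple Es))"
| tr_access: "\<lbrakk> fg_trans D \<Delta> e (TS s) E; TypeStruct s fs \<in> set D; i < length fs; fst (fs ! i) = f \<rbrakk>
     \<Longrightarrow> fg_trans D \<Delta> (Field e f) (snd (fs ! i))
           (case_tup E (KS s) (map VAux [1..<length fs + 1]) (TVar (VAux (i + 1))))"
| tr_call_struct: "\<lbrakk> (m, (ps, t)) \<in> methods D (TS s); fg_trans D \<Delta> e (TS s) E;
                     length es = length ps; length Es = length ps;
                     \<forall>i < length ps. fg_trans D \<Delta> (es ! i) (snd (ps ! i)) (Es ! i) \<rbrakk>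
     \<Longrightarrow> fg_trans D \<Delta> (Call e m es) t (TApp (TApp (TMeth m s) E) (tuple Es))"
| tr_call_iface: "\<lbrakk> fg_trans D \<Delta> e (TI tI) E; TypeIface tI Ss \<in> set D; j < length Ss;
                    Ss ! j = (m, (ps, t));
                    length es = length ps; length Es = length ps;
                    \<forall>i < length ps. fg_trans D \<Delta> (es ! i) (snd (ps ! i)) (Es ! i) \<rbrakk>
     \<Longrightarrow> fg_trans D \<Delta> (Call e m es) t
           (case_tup E (KI tI) (map VAux [1..<length Ss + 2])
              (TApp (TApp (TVar (VAux (j + 2))) (TVar (VAux 1))) (tuple Es)))"
| tr_sub: "\<lbrakk> fg_trans D \<Delta> e t E2; subty_tr D t u E1 \<rbrakk> \<Longrightarrow> fg_trans D \<Delta> e u (TApp E1 E2)"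
| tr_assert: "\<lbrakk> fg_trans D \<Delta> e (TI tI) E2; destr_tr D tI u E1 \<rbrakk>
     \<Longrightarrow> fg_trans D \<Delta> (Assert e u) u (TApp E1 E2)"

section \<open>Step-indexed logical relation\<close>

type_synonym vrel_fam = "nat \<Rightarrow> ty \<Rightarrow> fexp \<Rightarrow> texp \<Rightarrow> bool"

definition erelP :: "decls \<Rightarrow> msub \<Rightarrow> vrel_fam \<Rightarrow> nat \<Rightarrow> ty \<Rightarrow> fexp \<Rightarrow> texp \<Rightarrow> bool" where
  "erelP D \<sigma>m P k t e E \<longleftrightarrow>
     (\<forall>k1 k2 v V. k1 < k \<longrightarrow> k2 < k \<longrightarrow> k1 + k2 < k \<longrightarrow>
        fsteps_le D k1 e v \<longrightarrow> tsteps_le \<sigma>m k2 E V \<longrightarrow> P (k - k1 - k2) t v V)"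

fun mrelP :: "decls \<Rightarrow> msub \<Rightarrow> vrel_fam \<Rightarrow> nat \<Rightarrow> spec \<Rightarrow> decl \<Rightarrow> texp \<Rightarrow> bool" where
  "mrelP D \<sigma>m P k (m, (ps, t)) (Func x s m' M' e) V \<longleftrightarrow>
     m' = m \<and> M' = (ps, t) \<and>
     (\<forall>k' \<le> k. \<forall>v' V' vs Vs.
        P k' (TS s) v' V' \<longrightarrow> length vs = length ps \<longrightarrow> length Vs = length ps \<longrightarrow>
        (\<forall>i < length ps. P k' (snd (ps ! i)) (vs ! i) (Vs ! i)) \<longrightarrow>
        erelP D \<sigma>m P k' t (fsubst (upds (Var(x := v')) (map fst ps) vs) e)
                           (TApp (TApp V V') (tuple Vs)))"
| "mrelP D \<sigma>m P k S d V \<longleftrightarrow> False"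

text \<open>(Struct) and (Iface) at index \<open>k\<close>, where \<open>P j\<close> is the value relation at
  index \<open>j\<close> (only used for \<open>j < k\<close>); struct recursion is at the same index.\<close>
inductive vrelF :: "decls \<Rightarrow> msub \<Rightarrow> nat \<Rightarrow> vrel_fam \<Rightarrow> ty \<Rightarrow> fexp \<Rightarrow> texp \<Rightarrow> bool"
  for D \<sigma>m k P where
  vstruct: "\<lbrakk> TypeStruct s fs \<in> set D; length vs = length fs; length Vs = length fs;
              \<forall>i < length fs. vrelF D \<sigma>m k P (snd (fs ! i)) (vs ! i) (Vs ! i) \<rbrakk>
     \<Longrightarrow> vrelF D \<sigma>m k P (TS s) (SLit s vs) (TApp (TCon (KS s)) (tuple Vs))"
| viface: "\<lbrakk> TypeIface tI Ss \<in> set D; length Vms = length Ss;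
             fval v; tval V; V = capp (KS u) Vs'; list_all tval Vms;
             \<forall>k1 < k. P k1 (TS u) v V;
             \<forall>k2 < k. \<forall>i < length Ss. \<exists>d. method_lookup D (fst (Ss ! i)) u d \<and>
                                            mrelP D \<sigma>m P k2 (Ss ! i) d (Vms ! i) \<rbrakk>
     \<Longrightarrow> vrelF D \<sigma>m k P (TI tI) v (TApp (TCon (KI tI)) (tuple (V # Vms)))"

primrec vfam :: "decls \<Rightarrow> msub \<Rightarrow> nat \<Rightarrow> vrel_fam" where
  "vfam D \<sigma>m 0 = (\<lambda>_ _ _ _. False)"
| "vfam D \<sigma>m (Suc n) = (vfam D \<sigma>m n)(n := vrelF D \<sigma>m n (vfam D \<sigma>m n))"

definition vrel :: "decls \<Rightarrow> msub \<Rightarrow> nat \<Rightarrow> ty \<Rightarrow> fexp \<Rightarrow> texp \<Rightarrow> bool" where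
  "vrel D \<sigma>m k = vrelF D \<sigma>m k (vfam D \<sigma>m k)"

definition erel :: "decls \<Rightarrow> msub \<Rightarrow> nat \<Rightarrow> ty \<Rightarrow> fexp \<Rightarrow> texp \<Rightarrow> bool" where
  "erel D \<sigma>m = erelP D \<sigma>m (vrel D \<sigma>m)"

definition mrel :: "decls \<Rightarrow> msub \<Rightarrow> nat \<Rightarrow> spec \<Rightarrow> decl \<Rightarrow> texp \<Rightarrow> bool" where
  "mrel D \<sigma>m = mrelP D \<sigma>m (vrel D \<sigma>m)"

definition bindings_rel :: "decls \<Rightarrow> msub \<Rightarrow> (vname \<rightharpoonup> ty) \<Rightarrow> nat \<Rightarrow> (vname \<Rightarrow> fexp) \<Rightarrow> (tlvar \<Rightarrow> texp) \<Rightarrow> bool" where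
  "bindings_rel D \<sigma>m \<Delta> k \<sigma>F \<sigma>V \<longleftrightarrow> (\<forall>x t. \<Delta> x = Some t \<longrightarrow> vrel D \<sigma>m k t (\<sigma>F x) (\<sigma>V (VX x)))"

definition decls_rel :: "decls \<Rightarrow> nat \<Rightarrow> msub \<Rightarrow> bool" where
  "decls_rel D k \<sigma>m \<longleftrightarrow>
     (\<forall>x s m M e. Func x s m M e \<in> set D \<longrightarrow> mrel D \<sigma>m k (m, M) (Func x s m M e) (TMeth m s))"

end

theory Submission
  imports Defs
begin


section \<open>Substitution infrastructure\<close>

lemma finite_fv: "finite (fv e)"
  by (induction e) auto

lemma fresh_notin: "finite A \<Longrightarrow> fresh A \<notin> A"
proof -
  assume f: "finite A"
  have "finite {n. VAux n \<in> A}"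
    using finite_vimageI[OF f, of VAux] by (simp add: vimage_def inj_def)
  then have "\<exists>n. VAux n \<notin> A" using infinite_UNIV_nat
    by (metis (mono_tags, lifting) UNIV_eq_I mem_Collect_eq)
  then show ?thesis unfolding fresh_def by (metis (mono_tags, lifting) LeastI)
qed

lemma ren_props: "finite A \<Longrightarrow> length (ren A xs) = length xs \<and> distinct (ren A xs) \<and> set (ren A xs) \<inter> A = {}"
proof (induction xs arbitrary: A)
  case Nil then show ?case by simp
next
  case (Cons x xs)
  define x' where "x' = (if x \<in> A then fresh A else x)"
  have x'A: "x' \<notin> A" using fresh_notin[OF Cons.prems] by (simp add: x'_def)
  have IH: "length (ren (insert x' A) xs) = length xs \<and> distinct (ren (insert x' A) xs) \<and>
        set (ren (insert x' A) xs) \<inter> insert x' A = {}" using Cons.IH Cons.prems by simp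
  have "ren A (x # xs) = x' # ren (insert x' A) xs" by (simp add: x'_def Let_def)
  then show ?case using IH x'A by auto
qed

lemma ren_id: "distinct xs \<Longrightarrow> set xs \<inter> A = {} \<Longrightarrow> ren A xs = xs"
  by (induction xs arbitrary: A) (auto simp: Let_def)

lemma upds_Cons: "upds \<sigma> (x # xs) (v # vs) = upds (\<sigma>(x := v)) xs vs"
  by (simp add: upds_def)

lemma upds_notin: "y \<notin> set xs \<Longrightarrow> upds \<sigma> xs vs y = \<sigma> y"
proof (induction xs arbitrary: \<sigma> vs)
  case Nil then show ?case by (simp add: upds_def)
next
  case (Cons x xs) then show ?case by (cases vs) (auto simp: upds_def)
qed

lemma upds_nth: "distinct xs \<Longrightarrow> length xs = length vs \<Longrightarrow> i < length xs \<Longrightarrow> upds \<sigma> xs vs (xs ! i) = vs ! i"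
proof (induction xs arbitrary: \<sigma> vs i)
  case Nil then show ?case by simp
next
  case (Cons x xs)
  then obtain v vs' where vs: "vs = v # vs'" by (cases vs) auto
  show ?case
  proof (cases i)
    case 0 then show ?thesis using Cons.prems vs by (simp add: upds_Cons upds_notin)
  next
    case (Suc j) then show ?thesis using Cons vs by (simp add: upds_Cons)
  qed
qed

lemma upds_in: "length xs = length vs \<Longrightarrow> y \<in> set xs \<Longrightarrow> upds \<sigma> xs vs y \<in> set vs"
proof (induction xs arbitrary: \<sigma> vs)
  case Nil then show ?case by simp
next
  case (Cons x xs)
  then obtain v vs' where vs: "vs = v # vs'" by (cases vs) auto
  show ?case
  proof (cases "y \<in> set xs")
    case True then show ?thesis using Cons vs by (auto simp: upds_Cons)
  next
    case False then show ?thesis using Cons vs by (auto simp: upds_Cons upds_notin)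
  qed
qed

lemma upds_cong: "(y \<notin> set xs \<Longrightarrow> \<sigma> y = \<sigma>' y) \<Longrightarrow> length xs = length vs \<Longrightarrow> upds \<sigma> xs vs y = upds \<sigma>' xs vs y"
proof (induction xs arbitrary: \<sigma> \<sigma>' vs)
  case Nil then show ?case by (simp add: upds_def)
next
  case (Cons x xs)
  then obtain v vs' where vs: "vs = v # vs'" and len: "length xs = length vs'" by (cases vs) auto
  have "upds (\<sigma>(x := v)) xs vs' y = upds (\<sigma>'(x := v)) xs vs' y"
    by (rule Cons.IH) (use Cons.prems len in auto)
  then show ?case using vs by (simp add: upds_Cons)
qed

lemma upds_TVar_id: "upds TVar xs (map TVar xs) = TVar"
proof -
  have "\<And>\<sigma>. (\<forall>y. \<sigma> y = TVar y) \<Longrightarrow> upds \<sigma> xs (map TVar xs) = TVar"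
    by (induction xs) (auto simp: upds_def)
  then show ?thesis by simp
qed

definition lamvar :: "(tlvar \<Rightarrow> texp) \<Rightarrow> tlvar \<Rightarrow> texp \<Rightarrow> tlvar" where
  "lamvar \<sigma> x e = (let A = \<Union> (fv ` \<sigma> ` (fv e - {x})) in if x \<in> A then fresh A else x)"

definition clsubst :: "(tlvar \<Rightarrow> texp) \<Rightarrow> (con \<times> tlvar list) \<times> texp \<Rightarrow> (con \<times> tlvar list) \<times> texp" where
  "clsubst \<sigma> c = (let xs = snd (fst c); A = \<Union> (fv ` \<sigma> ` (fv (snd c) - set xs)); xs' = ren A xs
           in ((fst (fst c), xs'), tsubst (upds \<sigma> xs (map TVar xs')) (snd c)))"

lemma tsubst_TLam: "tsubst \<sigma> (TLam x e) = TLam (lamvar \<sigma> x e) (tsubst (\<sigma>(x := TVar (lamvar \<sigma> x e))) e)"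
  by (simp only: tsubst.simps lamvar_def Let_def)

lemma tsubst_TCase: "tsubst \<sigma> (TCase e cls) = TCase (tsubst \<sigma> e) (map (clsubst \<sigma>) cls)"
  unfolding tsubst.simps(6) clsubst_def[abs_def] by (rule refl)

declare tsubst.simps(5,6)[simp del]

lemma clsubst_eq: "clsubst \<sigma> ((K, xs), b) = ((K, ren (\<Union> (fv ` \<sigma> ` (fv b - set xs))) xs),
   tsubst (upds \<sigma> xs (map TVar (ren (\<Union> (fv ` \<sigma> ` (fv b - set xs))) xs))) b)"
  by (simp only: clsubst_def Let_def fst_conv snd_conv)

lemma lamvar_notin: "lamvar \<sigma> x e \<notin> \<Union> (fv ` \<sigma> ` (fv e - {x}))"
proof -
  have "finite (\<Union> (fv ` \<sigma> ` (fv e - {x})))" by (simp add: finite_fv)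
  then show ?thesis unfolding lamvar_def Let_def using fresh_notin by auto
qed

lemma tsubst_cong: "(\<And>y. y \<in> fv e \<Longrightarrow> \<sigma> y = \<sigma>' y) \<Longrightarrow> tsubst \<sigma> e = tsubst \<sigma>' e"
proof (induction e arbitrary: \<sigma> \<sigma>')
  case (TLam x e)
  have A: "\<Union> (fv ` \<sigma> ` (fv e - {x})) = \<Union> (fv ` \<sigma>' ` (fv e - {x}))"
    using TLam.prems by auto
  have L: "lamvar \<sigma> x e = lamvar \<sigma>' x e" by (simp only: lamvar_def A)
  show ?case
    apply (simp only: tsubst_TLam L)
    apply (rule arg_cong[where f="TLam _"])
    apply (rule TLam.IH)
    using TLam.prems by simp
next
  case (TCase e cls)
  have 1: "tsubst \<sigma> e = tsubst \<sigma>' e" by (rule TCase.IH(1)) (use TCase.prems in simp)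
  have 2: "clsubst \<sigma> c = clsubst \<sigma>' c" if c: "c \<in> set cls" for c
  proof -
    obtain K xs b where cc: "c = ((K, xs), b)" by (metis prod.collapse)
    have sub: "fv b - set xs \<subseteq> fv (TCase e cls)"
    proof -
      have "fv b - set xs \<in> set (map (\<lambda>c. fv (snd c) - set (snd (fst c))) cls)"
        using imageI[OF c, of "\<lambda>c. fv (snd c) - set (snd (fst c))"] cc by simp
      then show ?thesis by (simp only: fv.simps) blast
    qed
    have eq: "\<And>y. y \<in> fv b - set xs \<Longrightarrow> \<sigma> y = \<sigma>' y" using sub TCase.prems by blast
    have A: "\<Union> (fv ` \<sigma> ` (fv b - set xs)) = \<Union> (fv ` \<sigma>' ` (fv b - set xs))"
      using eq by (metis (no_types, lifting) image_cong)
    have len: "length xs = length (map TVar (ren (\<Union> (fv ` \<sigma>' ` (fv b - set xs))) xs))"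
      using ren_props[of _ xs] finite_fv by simp
    show ?thesis
      unfolding cc clsubst_eq A
      apply (rule arg_cong[where f="Pair _"])
      apply (rule TCase.IH(2)[OF c, of b])
       apply (simp add: cc)
      apply (rule upds_cong[OF _ len])
      using eq by blast
  qed
  have 3: "map (clsubst \<sigma>) cls = map (clsubst \<sigma>') cls" by (rule map_cong[OF refl 2])
  show ?case unfolding tsubst_TCase 1 3 by (rule refl)
next
  case (TApp a b)
  have "tsubst \<sigma> a = tsubst \<sigma>' a" by (rule TApp.IH(1)) (use TApp.prems in simp)
  moreover have "tsubst \<sigma> b = tsubst \<sigma>' b" by (rule TApp.IH(2)) (use TApp.prems in simp)
  ultimately show ?case by simp
next
  case (TVar x) then show ?case by simp
qed simp_all

lemma fv_tsubst: "fv (tsubst \<sigma> e) \<subseteq> \<Union> (fv ` \<sigma> ` fv e)"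
proof (induction e arbitrary: \<sigma>)
  case (TLam x e)
  define x' where "x' = lamvar \<sigma> x e"
  have "fv (tsubst (\<sigma>(x := TVar x')) e) - {x'} \<subseteq> \<Union> (fv ` \<sigma> ` (fv e - {x}))"
  proof
    fix z assume z: "z \<in> fv (tsubst (\<sigma>(x := TVar x')) e) - {x'}"
    then obtain y where y: "y \<in> fv e" "z \<in> fv ((\<sigma>(x := TVar x')) y)" using TLam.IH by blast
    show "z \<in> \<Union> (fv ` \<sigma> ` (fv e - {x}))"
      using y z by (cases "y = x") auto
  qed
  then show ?case by (simp add: tsubst_TLam x'_def[symmetric])
next
  case (TCase e cls)
  have "fv (snd (clsubst \<sigma> c)) - set (snd (fst (clsubst \<sigma> c))) \<subseteq> \<Union> (fv ` \<sigma> ` fv (TCase e cls))"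
    if c: "c \<in> set cls" for c
  proof -
    obtain K xs b where cc: "c = ((K, xs), b)" by (metis prod.collapse)
    define A where "A = \<Union> (fv ` \<sigma> ` (fv b - set xs))"
    have fA: "finite A" unfolding A_def by (simp add: finite_fv)
    define xs' where "xs' = ren A xs"
    have len: "length xs' = length xs" using ren_props[OF fA] xs'_def by simp
    have c'eq2: "clsubst \<sigma> c = ((K, xs'), tsubst (upds \<sigma> xs (map TVar xs')) b)"
      by (simp only: cc clsubst_eq A_def[symmetric] xs'_def[symmetric])
    show ?thesis
    proof
      fix z assume z: "z \<in> fv (snd (clsubst \<sigma> c)) - set (snd (fst (clsubst \<sigma> c)))"
      then have z1: "z \<in> fv (tsubst (upds \<sigma> xs (map TVar xs')) b)" "z \<notin> set xs'"
        using c'eq2 by auto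
      then obtain y where y: "y \<in> fv b" "z \<in> fv (upds \<sigma> xs (map TVar xs') y)"
        using TCase.IH(2)[OF c, of b] cc by auto
      show "z \<in> \<Union> (fv ` \<sigma> ` fv (TCase e cls))"
      proof (cases "y \<in> set xs")
        case True
        then have "upds \<sigma> xs (map TVar xs') y \<in> set (map TVar xs')" using upds_in[of xs "map TVar xs'"] len by simp
        then show ?thesis using y z1 by auto
      next
        case False
        have "z \<in> fv (\<sigma> y)" using y(2) upds_notin[OF False, of \<sigma> "map TVar xs'"] by simp
        moreover have "y \<in> fv (TCase e cls)" using y False c cc by force
        ultimately show ?thesis by blast
      qed
    qed
  qed
  moreover have "fv (tsubst \<sigma> e) \<subseteq> \<Union> (fv ` \<sigma> ` fv (TCase e cls))"
    using TCase.IH(1)[of \<sigma>] by auto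
  ultimately show ?case unfolding tsubst_TCase fv.simps(6)[of "tsubst \<sigma> e"] set_map
    apply -
    apply (rule Un_least)
     apply assumption
    apply (rule Union_least)
    apply (erule imageE)+
    by simp
next
  case (TApp a b)
  have 1: "fv (tsubst \<sigma> a) \<subseteq> \<Union> (fv ` \<sigma> ` fv a)" by (rule TApp.IH(1))
  have 2: "fv (tsubst \<sigma> b) \<subseteq> \<Union> (fv ` \<sigma> ` fv b)" by (rule TApp.IH(2))
  show ?case using 1 2 by auto
qed simp_all


section \<open>Distinct binders\<close>

fun dbind :: "texp \<Rightarrow> bool" where
  "dbind (TApp a b) = (dbind a \<and> dbind b)"
| "dbind (TLam x e) = dbind e"
| "dbind (TCase e cls) = (dbind e \<and> (\<forall>c \<in> set cls. distinct (snd (fst c)) \<and> dbind (snd c)))"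
| "dbind _ = True"

lemma dbind_upds: "length xs = length xs' \<Longrightarrow> (y \<notin> set xs \<Longrightarrow> dbind (\<sigma> y)) \<Longrightarrow> dbind (upds \<sigma> xs (map TVar xs') y)"
proof (cases "y \<in> set xs")
  case True
  assume l: "length xs = length xs'"
  then have "upds \<sigma> xs (map TVar xs') y \<in> set (map TVar xs')" using upds_in[of xs "map TVar xs'"] True by simp
  then show ?thesis by auto
next
  case False
  assume "y \<notin> set xs \<Longrightarrow> dbind (\<sigma> y)"
  then show ?thesis using upds_notin[OF False, of \<sigma> "map TVar xs'"] False by simp
qed

lemma dbind_tsubst: "(\<And>y. y \<in> fv e \<Longrightarrow> dbind (\<sigma> y)) \<Longrightarrow> dbind (tsubst \<sigma> e)"
proof (induction e arbitrary: \<sigma>)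
  case (TLam x e)
  have "dbind (tsubst (\<sigma>(x := TVar (lamvar \<sigma> x e))) e)"
    by (rule TLam.IH) (use TLam.prems in simp)
  then show ?case by (simp add: tsubst_TLam)
next
  case (TCase e cls)
  have "distinct (snd (fst (clsubst \<sigma> c))) \<and> dbind (snd (clsubst \<sigma> c))" if c: "c \<in> set cls" for c
  proof -
    obtain K xs b where cc: "c = ((K, xs), b)" by (metis prod.collapse)
    have "finite (\<Union> (fv ` \<sigma> ` (fv b - set xs)))" by (simp add: finite_fv)
    then have rp: "distinct (ren (\<Union> (fv ` \<sigma> ` (fv b - set xs))) xs) \<and> length (ren (\<Union> (fv ` \<sigma> ` (fv b - set xs))) xs) = length xs" using ren_props by blast
    have sub: "fv b - set xs \<subseteq> fv (TCase e cls)"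
    proof -
      have "fv b - set xs \<in> set (map (\<lambda>c. fv (snd c) - set (snd (fst c))) cls)"
        using imageI[OF c, of "\<lambda>c. fv (snd c) - set (snd (fst c))"] cc by simp
      then show ?thesis by (simp only: fv.simps) blast
    qed
    have "dbind (tsubst (upds \<sigma> xs (map TVar (ren (\<Union> (fv ` \<sigma> ` (fv b - set xs))) xs))) b)"
      apply (rule TCase.IH(2)[OF c, of b])
       apply (simp add: cc)
      apply (rule dbind_upds)
      using rp apply simp
      using sub TCase.prems by blast
    then show ?thesis unfolding cc clsubst_eq using rp by simp
  qed
  moreover have "dbind (tsubst \<sigma> e)" by (rule TCase.IH(1)) (use TCase.prems in simp)
  ultimately show ?case by (simp add: tsubst_TCase)
next
  case (TApp a b)
  have 1: "dbind (tsubst \<sigma> a)" by (rule TApp.IH(1)) (use TApp.prems in simp)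
  have 2: "dbind (tsubst \<sigma> b)" by (rule TApp.IH(2)) (use TApp.prems in simp)
  show ?case using 1 2 by simp
next
  case (TVar x) then show ?case by simp
qed simp_all

lemma tsubst_TVar: "dbind e \<Longrightarrow> tsubst TVar e = e"
proof (induction e)
  case (TLam x e)
  have "lamvar TVar x e = x" unfolding lamvar_def Let_def by auto
  then show ?case using TLam by (simp add: tsubst_TLam)
next
  case (TCase e cls)
  have "clsubst TVar c = c" if c: "c \<in> set cls" for c
  proof -
    obtain K xs b where cc: "c = ((K, xs), b)" by (metis prod.collapse)
    have d: "distinct xs" "dbind b" using TCase.prems c cc by auto
    have A: "\<Union> (fv ` TVar ` (fv b - set xs)) = fv b - set xs" by auto
    have r: "ren (fv b - set xs) xs = xs" by (rule ren_id) (use d in auto)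
    have "tsubst TVar b = b" using TCase.IH(2)[OF c, of b] cc d by simp
    then show ?thesis unfolding cc clsubst_eq A r upds_TVar_id by simp
  qed
  then have "map (clsubst TVar) cls = cls" by (simp add: map_idI)
  then show ?case using TCase by (simp add: tsubst_TCase)
next
  case (TApp a b)
  then show ?case by simp
qed simp_all

lemma tsubst_id: "dbind e \<Longrightarrow> (\<And>y. y \<in> fv e \<Longrightarrow> \<sigma> y = TVar y) \<Longrightarrow> tsubst \<sigma> e = e"
  using tsubst_cong[of e \<sigma> TVar] tsubst_TVar by simp

lemma tsubst_closed: "dbind e \<Longrightarrow> fv e = {} \<Longrightarrow> tsubst \<sigma> e = e"
  using tsubst_id[of e \<sigma>] by simp

lemma upds_in_set: "distinct xs \<Longrightarrow> y \<in> set xs \<Longrightarrow> upds \<sigma> xs (map TVar xs) y = TVar y"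
proof -
  assume d: "distinct xs" and y: "y \<in> set xs"
  then obtain i where i: "i < length xs" "y = xs ! i" by (metis in_set_conv_nth)
  then show ?thesis using upds_nth[OF d, of "map TVar xs" i \<sigma>] by simp
qed

lemma tsubst_case1:
  assumes "distinct xs" "fv b \<subseteq> set xs" "dbind b"
  shows "tsubst \<sigma> (TCase e [((K, xs), b)]) = TCase (tsubst \<sigma> e) [((K, xs), b)]"
proof -
  have A: "\<Union> (fv ` \<sigma> ` (fv b - set xs)) = {}" using assms by auto
  have r: "ren {} xs = xs" by (rule ren_id) (use assms in auto)
  have "tsubst (upds \<sigma> xs (map TVar xs)) b = b"
    by (rule tsubst_id[OF assms(3)]) (use assms upds_in_set in blast)
  then show ?thesis unfolding tsubst_TCase list.map clsubst_eq A r by simp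
qed

lemma tsubst_case_tup:
  assumes "distinct xs" "fv b \<subseteq> set xs" "dbind b"
  shows "tsubst \<sigma> (case_tup E K xs b) = case_tup (tsubst \<sigma> E) K xs b"
proof -
  have "tsubst \<sigma> (case_tup E K xs b) = TCase (tsubst \<sigma> E) [((K, [VAux 0]), TCase (TVar (VAux 0)) [((KTup (length xs), xs), b)])]"
    unfolding case_tup_def by (rule tsubst_case1) (use assms in auto)
  then show ?thesis by (simp add: case_tup_def)
qed

lemma foldl_TApp_snoc: "foldl TApp h (xs @ [x]) = TApp (foldl TApp h xs) x" by simp

lemma capp_snoc: "capp K (Es @ [E]) = TApp (capp K Es) E"
  by (simp add: capp_def)

lemma capp_Nil: "capp K [] = TCon K" by (simp add: capp_def)

lemma tsubst_foldl: "tsubst \<sigma> (foldl TApp h Es) = foldl TApp (tsubst \<sigma> h) (map (tsubst \<sigma>) Es)"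
  by (induction Es arbitrary: h) simp_all

lemma tsubst_capp: "tsubst \<sigma> (capp K Es) = capp K (map (tsubst \<sigma>) Es)"
  by (simp add: capp_def tsubst_foldl)

lemma tsubst_tuple: "tsubst \<sigma> (tuple Es) = tuple (map (tsubst \<sigma>) Es)"
  by (simp add: tuple_def tsubst_capp)

lemma fv_foldl: "fv (foldl TApp h Es) = fv h \<union> \<Union> (fv ` set Es)"
  by (induction Es arbitrary: h) auto

lemma fv_capp: "fv (capp K Es) = \<Union> (fv ` set Es)"
  by (simp add: capp_def fv_foldl)

lemma fv_tuple: "fv (tuple Es) = \<Union> (fv ` set Es)"
  by (simp add: tuple_def fv_capp)

lemma dbind_foldl: "dbind (foldl TApp h Es) = (dbind h \<and> list_all dbind Es)"
  by (induction Es arbitrary: h) auto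

lemma dbind_capp: "dbind (capp K Es) = list_all dbind Es"
  by (simp add: capp_def dbind_foldl)

lemma dbind_tuple: "dbind (tuple Es) = list_all dbind Es"
  by (simp add: tuple_def dbind_capp)

lemma cval_foldl: "cval (foldl TApp h Es) = (cval h \<and> list_all tval Es)"
  by (induction Es arbitrary: h) (auto simp: tval_def)

lemma cval_capp: "cval (capp K Es) = list_all tval Es"
  by (simp add: capp_def cval_foldl)

lemma tval_capp: "tval (capp K Es) = list_all tval Es"
proof -
  have "\<not> is_tvar (capp K Es)"
    by (cases Es rule: rev_exhaust) (simp_all add: capp_def)
  then show ?thesis by (simp add: tval_def cval_capp)
qed

lemma tval_tuple: "tval (tuple Es) = list_all tval Es"
  by (simp add: tuple_def tval_capp)

lemma capp_inj: "capp K Vs = capp K' Vs' \<Longrightarrow> K = K' \<and> Vs = Vs'"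
proof (induction Vs arbitrary: Vs' rule: rev_induct)
  case Nil
  then show ?case by (cases Vs' rule: rev_exhaust) (simp_all add: capp_def)
next
  case (snoc x xs)
  then show ?case by (cases Vs' rule: rev_exhaust) (simp_all add: capp_def)
qed

lemma capp_single: "capp K [Y] = TApp (TCon K) Y" by (simp add: capp_def)

lemma tuple_Cons_capp: "tuple Es = capp (KTup (length Es)) Es" by (simp add: tuple_def)


section \<open>TL reduction lemmas\<close>

lemma tval_nostep: "tstep \<sigma>m V W \<Longrightarrow> tval V \<Longrightarrow> False"
proof (induction rule: tstep.induct)
  case (ctx_appL E1 E1' E2)
  then show ?case by (simp add: tval_def)
next
  case (ctx_appR V E E')
  then show ?case by (simp add: tval_def)
qed (simp_all add: tval_def)

lemma tval_steps: "(tstep \<sigma>m ^^ n) V W \<Longrightarrow> tval V \<Longrightarrow> n = 0 \<and> W = V"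
proof (cases n)
  case 0
  assume "(tstep \<sigma>m ^^ n) V W" then show ?thesis using 0 by simp
next
  case (Suc n')
  assume a: "(tstep \<sigma>m ^^ n) V W" "tval V"
  from a(1) obtain b where "tstep \<sigma>m V b" unfolding Suc by (rule relpowp_Suc_E2)
  then show ?thesis using tval_nostep a(2) by blast
qed

lemma tstep_TApp_E:
  assumes "tstep \<sigma>m (TApp A X) W"
  obtains (beta) x b where "A = TLam x b" "tval X" "W = tsubst (TVar(x := X)) b"
  | (meth) m s L where "A = TMeth m s" "\<sigma>m (m, s) = Some L" "W = TApp L X"
  | (left) A' where "tstep \<sigma>m A A'" "W = TApp A' X"
  | (right) X' where "tval A" "tstep \<sigma>m X X'" "W = TApp A X'"
  using assms by (cases rule: tstep.cases) auto

lemma tstep_TCase_E: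
  assumes "tstep \<sigma>m (TCase E cls) W"
  obtains (red) K Vs xs B where "E = capp K Vs" "list_all tval Vs" "((K, xs), B) \<in> set cls"
      "length xs = length Vs" "W = tsubst (upds TVar xs Vs) B"
  | (ctx) E' where "tstep \<sigma>m E E'" "W = TCase E' cls"
  using assms by (cases rule: tstep.cases) auto

lemma tstep_TLam_E: "tstep \<sigma>m (TLam x b) W \<Longrightarrow> False"
  by (cases rule: tstep.cases) auto

lemma tstep_TMeth_E: "tstep \<sigma>m (TMeth m s) W \<Longrightarrow> False"
  by (cases rule: tstep.cases) auto

lemma capp_not_Lam: "capp K Es \<noteq> TLam x b"
  by (cases Es rule: rev_exhaust) (simp_all add: capp_def)

lemma capp_not_Meth: "capp K Es \<noteq> TMeth m s"
  by (cases Es rule: rev_exhaust) (simp_all add: capp_def)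

lemma tstep_capp_inv: "tstep \<sigma>m (capp K Es) W \<Longrightarrow>
   \<exists>i E'. i < length Es \<and> tstep \<sigma>m (Es ! i) E' \<and> W = capp K (Es[i := E'])"
proof (induction Es arbitrary: W rule: rev_induct)
  case Nil
  then show ?case using tval_nostep by (fastforce simp: capp_def tval_def)
next
  case (snoc E Es)
  from snoc.prems have st: "tstep \<sigma>m (TApp (capp K Es) E) W" by (simp add: capp_snoc)
  then show ?case
  proof (cases rule: tstep_TApp_E)
    case (beta x b) then show ?thesis using capp_not_Lam by metis
  next
    case (meth m s L) then show ?thesis using capp_not_Meth by metis
  next
    case (left A')
    from snoc.IH[OF left(1)] obtain i E' where i: "i < length Es" "tstep \<sigma>m (Es ! i) E'" "A' = capp K (Es[i := E'])"
      by blast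
    show ?thesis
      apply (rule exI[of _ i], rule exI[of _ E'])
      using i left by (simp add: nth_append list_update_append1 capp_snoc)
  next
    case (right X')
    show ?thesis
      apply (rule exI[of _ "length Es"], rule exI[of _ X'])
      using right by (simp add: capp_snoc)
  qed
qed

lemma sum_list_upd_Suc: "i < length ns \<Longrightarrow> sum_list (ns[i := Suc (ns ! i)]) = Suc (sum_list (ns :: nat list))"
  by (induction ns arbitrary: i) (auto split: nat.splits)

lemma sum_replicate0: "sum_list (replicate n (0::nat)) = 0"
  by (induction n) auto

lemma list_steps:
  fixes C :: "'a list \<Rightarrow> 'b" and R :: "'b \<Rightarrow> 'b \<Rightarrow> bool" and S :: "'a \<Rightarrow> 'a \<Rightarrow> bool"
  assumes inv: "\<And>es w. R (C es) w \<Longrightarrow> \<not> list_all val es \<Longrightarrow>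
                  \<exists>i e'. i < length es \<and> S (es ! i) e' \<and> w = C (es[i := e'])"
    and nfin: "\<And>es. \<not> list_all val es \<Longrightarrow> \<not> fin (C es)"
  shows "(R ^^ n) (C es) v \<Longrightarrow> fin v \<Longrightarrow>
    \<exists>vs ns. length vs = length es \<and> length ns = length es \<and> list_all val vs \<and>
       (\<forall>i < length es. (S ^^ (ns ! i)) (es ! i) (vs ! i)) \<and> sum_list ns \<le> n \<and>
       (R ^^ (n - sum_list ns)) (C vs) v"
proof (induction n arbitrary: es)
  case 0
  show ?case
  proof (cases "list_all val es")
    case True
    show ?thesis
      apply (rule exI[of _ es], rule exI[of _ "replicate (length es) 0"])
      using True 0 by (simp add: sum_replicate0)
  next
    case False
    then show ?thesis using 0 nfin by auto
  qed
next
  case (Suc n)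
  show ?case
  proof (cases "list_all val es")
    case True
    show ?thesis
      apply (rule exI[of _ es], rule exI[of _ "replicate (length es) 0"])
      using True Suc.prems by (simp only: sum_replicate0 diff_zero length_replicate nth_replicate relpowp_0_I) simp
  next
    case False
    from Suc.prems(1) obtain w where w1: "R (C es) w" and w2: "(R ^^ n) w v" by (rule relpowp_Suc_E2)
    from inv[OF w1 False] obtain i e' where i: "i < length es" "S (es ! i) e'" "w = C (es[i := e'])" by blast
    from Suc.IH[of "es[i := e']"] w2 i Suc.prems(2) obtain vs ns where
      IH: "length vs = length es" "length ns = length es" "list_all val vs"
       "\<forall>j < length es. (S ^^ (ns ! j)) ((es[i := e']) ! j) (vs ! j)" "sum_list ns \<le> n"
       "(R ^^ (n - sum_list ns)) (C vs) v" by auto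
    define ns' where "ns' = ns[i := Suc (ns ! i)]"
    have sum: "sum_list ns' = Suc (sum_list ns)" unfolding ns'_def using sum_list_upd_Suc i IH by simp
    have steps: "\<forall>j < length es. (S ^^ (ns' ! j)) (es ! j) (vs ! j)"
    proof (intro allI impI)
      fix j assume j: "j < length es"
      show "(S ^^ (ns' ! j)) (es ! j) (vs ! j)"
      proof (cases "j = i")
        case True
        then have "(S ^^ (ns ! i)) e' (vs ! i)" using IH(4) i by auto
        then have "(S ^^ Suc (ns ! i)) (es ! i) (vs ! i)" by (rule relpowp_Suc_I2[of S, OF i(2)])
        then show ?thesis using True i IH(2) ns'_def by simp
      next
        case False
        have "(S ^^ (ns ! j)) ((es[i := e']) ! j) (vs ! j)" using IH(4) j by blast
        then show ?thesis using False ns'_def by simp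
      qed
    qed
    show ?thesis
      apply (rule exI[of _ vs], rule exI[of _ ns'])
      using IH sum steps ns'_def by simp
  qed
qed

lemma capp_steps:
  assumes "(tstep \<sigma>m ^^ n) (capp K Es) V" "tval V"
  shows "\<exists>Vs ns. length Vs = length Es \<and> length ns = length Es \<and> list_all tval Vs \<and>
       (\<forall>i < length Es. (tstep \<sigma>m ^^ (ns ! i)) (Es ! i) (Vs ! i)) \<and> sum_list ns = n \<and> V = capp K Vs"
proof -
  have "\<exists>vs ns. length vs = length Es \<and> length ns = length Es \<and> list_all tval vs \<and>
       (\<forall>i < length Es. (tstep \<sigma>m ^^ (ns ! i)) (Es ! i) (vs ! i)) \<and> sum_list ns \<le> n \<and>
       (tstep \<sigma>m ^^ (n - sum_list ns)) (capp K vs) V"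
    apply (rule list_steps[where C = "capp K" and fin = tval])
    using tstep_capp_inv apply blast
    using tval_capp apply blast
    using assms by auto
  then obtain Vs ns where H: "length Vs = length Es" "length ns = length Es" "list_all tval Vs"
       "\<forall>i < length Es. (tstep \<sigma>m ^^ (ns ! i)) (Es ! i) (Vs ! i)" "sum_list ns \<le> n"
       "(tstep \<sigma>m ^^ (n - sum_list ns)) (capp K Vs) V" by blast
  have "n - sum_list ns = 0 \<and> V = capp K Vs"
    using tval_steps[OF H(6)] H(3) tval_capp by blast
  then show ?thesis using H by (intro exI[of _ Vs] exI[of _ ns]) auto
qed

lemma tuple_steps:
  assumes "(tstep \<sigma>m ^^ n) (tuple Es) V" "tval V"
  shows "\<exists>Vs ns. length Vs = length Es \<and> length ns = length Es \<and> list_all tval Vs \<and>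
       (\<forall>i < length Es. (tstep \<sigma>m ^^ (ns ! i)) (Es ! i) (Vs ! i)) \<and> sum_list ns = n \<and> V = tuple Vs"
proof -
  obtain Vs ns where H: "length Vs = length Es \<and> length ns = length Es \<and> list_all tval Vs \<and>
       (\<forall>i < length Es. (tstep \<sigma>m ^^ (ns ! i)) (Es ! i) (Vs ! i)) \<and> sum_list ns = n \<and> V = capp (KTup (length Es)) Vs"
    using capp_steps[OF assms[unfolded tuple_def]] by blast
  then show ?thesis unfolding tuple_def by (intro exI[of _ Vs] exI[of _ ns]) auto
qed

lemma app_outer_steps:
  "(tstep \<sigma>m ^^ n) (TApp A X) V \<Longrightarrow> tval V \<Longrightarrow>
   \<exists>a Vx. a \<le> n \<and> tval Vx \<and> (tstep \<sigma>m ^^ a) X Vx \<and> (tstep \<sigma>m ^^ (n - a)) (TApp A Vx) V"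
proof (induction n arbitrary: A X)
  case 0
  then have "tval X" by (auto simp: tval_def)
  then show ?case using 0 by (intro exI[of _ 0] exI[of _ X]) auto
next
  case (Suc n)
  show ?case
  proof (cases "tval X")
    case True
    then show ?thesis using Suc.prems by (intro exI[of _ 0] exI[of _ X]) auto
  next
    case False
    from Suc.prems(1) obtain W where w1: "tstep \<sigma>m (TApp A X) W" and w2: "(tstep \<sigma>m ^^ n) W V"
      by (rule relpowp_Suc_E2)
    from w1 show ?thesis
    proof (cases rule: tstep_TApp_E)
      case (beta x b) then show ?thesis using False by simp
    next
      case (meth m s L)
      from Suc.IH[of L X] w2 meth Suc.prems(2) obtain a Vx where
        H: "a \<le> n" "tval Vx" "(tstep \<sigma>m ^^ a) X Vx" "(tstep \<sigma>m ^^ (n - a)) (TApp L Vx) V" by auto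
      have "tstep \<sigma>m (TApp A Vx) (TApp L Vx)" using meth tstep.meth by simp
      then have "(tstep \<sigma>m ^^ (Suc (n - a))) (TApp A Vx) V" using H(4) relpowp_Suc_I2 by metis
      moreover have "Suc (n - a) = Suc n - a" using H(1) by simp
      ultimately show ?thesis using H by (intro exI[of _ a] exI[of _ Vx]) auto
    next
      case (left A')
      from Suc.IH[of A' X] w2 left Suc.prems(2) obtain a Vx where
        H: "a \<le> n" "tval Vx" "(tstep \<sigma>m ^^ a) X Vx" "(tstep \<sigma>m ^^ (n - a)) (TApp A' Vx) V" by auto
      have "tstep \<sigma>m (TApp A Vx) (TApp A' Vx)" using left tstep.ctx_appL by simp
      then have "(tstep \<sigma>m ^^ (Suc (n - a))) (TApp A Vx) V" using H(4) relpowp_Suc_I2 by metis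
      moreover have "Suc (n - a) = Suc n - a" using H(1) by simp
      ultimately show ?thesis using H by (intro exI[of _ a] exI[of _ Vx]) auto
    next
      case (right X')
      from Suc.IH[of A X'] w2 right Suc.prems(2) obtain a Vx where
        H: "a \<le> n" "tval Vx" "(tstep \<sigma>m ^^ a) X' Vx" "(tstep \<sigma>m ^^ (n - a)) (TApp A Vx) V" by auto
      have "(tstep \<sigma>m ^^ Suc a) X Vx" using right(2) H(3) relpowp_Suc_I2 by metis
      then show ?thesis using H by (intro exI[of _ "Suc a"] exI[of _ Vx]) auto
    qed
  qed
qed

lemma app_inner_steps:
  "(tstep \<sigma>m ^^ n) (TApp (TApp A X) Y) V \<Longrightarrow> tval V \<Longrightarrow> method_subst \<sigma>m \<Longrightarrow>
   (\<exists>m s. A = TMeth m s) \<or> (\<exists>x b. A = TLam x b) \<Longrightarrow>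
   \<exists>a Vx. a \<le> n \<and> tval Vx \<and> (tstep \<sigma>m ^^ a) X Vx \<and> (tstep \<sigma>m ^^ (n - a)) (TApp (TApp A Vx) Y) V"
proof (induction n arbitrary: A X)
  case 0
  then have False by (auto simp: tval_def)
  then show ?case ..
next
  case (Suc n)
  show ?case
  proof (cases "tval X")
    case True
    then show ?thesis using Suc.prems by (intro exI[of _ 0] exI[of _ X]) auto
  next
    case False
    have Anv: "\<not> tval (TApp A X)" using Suc.prems(4) by (auto simp: tval_def)
    from Suc.prems(1) obtain W where w1: "tstep \<sigma>m (TApp (TApp A X) Y) W" and w2: "(tstep \<sigma>m ^^ n) W V"
      by (rule relpowp_Suc_E2)
    from w1 show ?thesis
    proof (cases rule: tstep_TApp_E)
      case (beta x b) then show ?thesis by simp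
    next
      case (meth m s L) then show ?thesis by simp
    next
      case (right X') then show ?thesis using Anv by simp
    next
      case (left A1)
      from left(1) show ?thesis
      proof (cases rule: tstep_TApp_E)
        case (beta x b) then show ?thesis using False by simp
      next
        case (meth m s L)
        from Suc.prems(3) meth(2) obtain x b where L: "L = TLam x b"
          unfolding method_subst_def by blast
        from Suc.IH[of L X] w2 meth left Suc.prems(2,3) L obtain a Vx where
          H: "a \<le> n" "tval Vx" "(tstep \<sigma>m ^^ a) X Vx" "(tstep \<sigma>m ^^ (n - a)) (TApp (TApp L Vx) Y) V" by auto
        have "tstep \<sigma>m (TApp (TApp A Vx) Y) (TApp (TApp L Vx) Y)" using meth tstep.meth tstep.ctx_appL by simp
        then have "(tstep \<sigma>m ^^ (Suc (n - a))) (TApp (TApp A Vx) Y) V" using H(4) relpowp_Suc_I2 by metis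
        moreover have "Suc (n - a) = Suc n - a" using H(1) by simp
        ultimately show ?thesis using H by (intro exI[of _ a] exI[of _ Vx]) auto
      next
        case (left A')
        then show ?thesis using Suc.prems(4) tstep_TLam_E tstep_TMeth_E by metis
      next
        case (right X')
        from Suc.IH[of A X'] w2 right left Suc.prems(2,3,4) obtain a Vx where
          H: "a \<le> n" "tval Vx" "(tstep \<sigma>m ^^ a) X' Vx" "(tstep \<sigma>m ^^ (n - a)) (TApp (TApp A Vx) Y) V" by auto
        have "(tstep \<sigma>m ^^ Suc a) X Vx" using right(2) H(3) relpowp_Suc_I2 by metis
        then show ?thesis using H by (intro exI[of _ "Suc a"] exI[of _ Vx]) auto
      qed
    qed
  qed
qed

lemma case_steps:
  "(tstep \<sigma>m ^^ n) (TCase E cls) V \<Longrightarrow> tval V \<Longrightarrow>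
   \<exists>a V0. a < n \<and> tval V0 \<and> (tstep \<sigma>m ^^ a) E V0 \<and> (tstep \<sigma>m ^^ (n - a)) (TCase V0 cls) V"
proof (induction n arbitrary: E)
  case 0
  then have False by (auto simp: tval_def)
  then show ?case ..
next
  case (Suc n)
  show ?case
  proof (cases "tval E")
    case True
    then show ?thesis using Suc.prems by (intro exI[of _ 0] exI[of _ E]) auto
  next
    case False
    from Suc.prems(1) obtain W where w1: "tstep \<sigma>m (TCase E cls) W" and w2: "(tstep \<sigma>m ^^ n) W V"
      by (rule relpowp_Suc_E2)
    from w1 show ?thesis
    proof (cases rule: tstep_TCase_E)
      case (red K Vs xs B) then show ?thesis using False tval_capp by simp
    next
      case (ctx E')
      from Suc.IH[of E'] w2 ctx Suc.prems(2) obtain a V0 where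
        H: "a < n" "tval V0" "(tstep \<sigma>m ^^ a) E' V0" "(tstep \<sigma>m ^^ (n - a)) (TCase V0 cls) V" by auto
      have "(tstep \<sigma>m ^^ Suc a) E V0" using ctx(1) H(3) relpowp_Suc_I2 by metis
      then show ?thesis using H by (intro exI[of _ "Suc a"] exI[of _ V0]) auto
    qed
  qed
qed

lemma caseval_step:
  assumes "tstep \<sigma>m (TCase (capp K Vs) cls) W" "list_all tval Vs"
  shows "\<exists>xs B. ((K, xs), B) \<in> set cls \<and> length xs = length Vs \<and> W = tsubst (upds TVar xs Vs) B"
  using assms(1)
proof (cases rule: tstep_TCase_E)
  case (red K' Vs' xs B)
  then show ?thesis using capp_inj[OF red(1)] by auto
next
  case (ctx E')
  then show ?thesis using tval_nostep assms(2) tval_capp by blast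
qed

lemma steps_SucE: "(R ^^ n) a c \<Longrightarrow> \<not> (\<exists>b. R a b) \<Longrightarrow> n = 0 \<and> c = a"
proof (cases n)
  case 0
  assume "(R ^^ n) a c" then show ?thesis using 0 by simp
next
  case (Suc n')
  assume a: "(R ^^ n) a c" "\<not> (\<exists>b. R a b)"
  from a(1) obtain b where "R a b" unfolding Suc by (rule relpowp_Suc_E2)
  then show ?thesis using a(2) by blast
qed


section \<open>FG reduction lemmas\<close>

lemma fval_nostep: "fstep D v w \<Longrightarrow> fval v \<Longrightarrow> False"
  by (induction rule: fstep.induct) auto

lemma fval_steps: "(fstep D ^^ n) v w \<Longrightarrow> fval v \<Longrightarrow> n = 0 \<and> w = v"
  using steps_SucE[where R="fstep D" and n=n and a=v and c=w] fval_nostep by blast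

lemma fstep_SLit_inv: assumes "fstep D (SLit s es) w" shows
   "\<exists>i e'. i < length es \<and> fstep D (es ! i) e' \<and> w = SLit s (es[i := e'])"
proof -
  have "\<exists>vs e e' rest. es = vs @ e # rest \<and> fstep D e e' \<and> w = SLit s (vs @ e' # rest)"
    using assms by (cases rule: fstep.cases) auto
  then obtain vs e e' rest where H: "es = vs @ e # rest" "fstep D e e'" "w = SLit s (vs @ e' # rest)" by blast
  show ?thesis using H by (intro exI[of _ "length vs"] exI[of _ e']) (auto simp: list_update_append)
qed

lemma fstep_Call_args_inv: assumes "fstep D (Call v m es) w" "fval v" "\<not> list_all fval es" shows
   "\<exists>i e'. i < length es \<and> fstep D (es ! i) e' \<and> w = Call v m (es[i := e'])"
proof -
  have "\<exists>vs e e' rest. es = vs @ e # rest \<and> fstep D e e' \<and> w = Call v m (vs @ e' # rest)"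
    using assms(1)
  proof (cases rule: fstep.cases)
    case ctx_recv
    then show ?thesis using fval_nostep assms(2) by blast
  qed (use assms in auto)
  then obtain vs e e' rest where H: "es = vs @ e # rest" "fstep D e e'" "w = Call v m (vs @ e' # rest)" by blast
  show ?thesis using H by (intro exI[of _ "length vs"] exI[of _ e']) (auto simp: list_update_append)
qed

lemma lit_steps:
  assumes "(fstep D ^^ n) (SLit s es) v" "fval v"
  shows "\<exists>vs ns. length vs = length es \<and> length ns = length es \<and> list_all fval vs \<and>
       (\<forall>i < length es. (fstep D ^^ (ns ! i)) (es ! i) (vs ! i)) \<and> sum_list ns = n \<and> v = SLit s vs"
proof -
  have "\<exists>vs ns. length vs = length es \<and> length ns = length es \<and> list_all fval vs \<and>
       (\<forall>i < length es. (fstep D ^^ (ns ! i)) (es ! i) (vs ! i)) \<and> sum_list ns \<le> n \<and>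
       (fstep D ^^ (n - sum_list ns)) (SLit s vs) v"
    apply (rule list_steps[where C = "SLit s" and fin = fval])
    using fstep_SLit_inv apply blast
    using assms by auto
  then obtain vs ns where H: "length vs = length es" "length ns = length es" "list_all fval vs"
       "\<forall>i < length es. (fstep D ^^ (ns ! i)) (es ! i) (vs ! i)" "sum_list ns \<le> n"
       "(fstep D ^^ (n - sum_list ns)) (SLit s vs) v" by blast
  have "n - sum_list ns = 0 \<and> v = SLit s vs"
    using fval_steps[OF H(6)] H(3) by simp
  then show ?thesis using H by (intro exI[of _ vs] exI[of _ ns]) auto
qed

lemma call_args_steps:
  assumes "(fstep D ^^ n) (Call v0 m es) v" "fval v" "fval v0"
  shows "\<exists>vs ns. length vs = length es \<and> length ns = length es \<and> list_all fval vs \<and>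
       (\<forall>i < length es. (fstep D ^^ (ns ! i)) (es ! i) (vs ! i)) \<and> sum_list ns \<le> n \<and>
       (fstep D ^^ (n - sum_list ns)) (Call v0 m vs) v"
  apply (rule list_steps[where C = "Call v0 m" and fin = fval])
  using fstep_Call_args_inv assms(3) apply blast
  using assms by auto

lemma call_recv_steps:
  "(fstep D ^^ n) (Call e m es) v \<Longrightarrow> fval v \<Longrightarrow>
   \<exists>a v0. a \<le> n \<and> fval v0 \<and> (fstep D ^^ a) e v0 \<and> (fstep D ^^ (n - a)) (Call v0 m es) v"
proof (induction n arbitrary: e)
  case 0
  then show ?case by (auto elim: relpowp_0_E)
next
  case (Suc n)
  show ?case
  proof (cases "fval e")
    case True
    then show ?thesis using Suc.prems by (intro exI[of _ 0] exI[of _ e]) auto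
  next
    case False
    from Suc.prems(1) obtain w where w1: "fstep D (Call e m es) w" and w2: "(fstep D ^^ n) w v"
      by (rule relpowp_Suc_E2)
    from w1 have "\<exists>e'. fstep D e e' \<and> w = Call e' m es"
      by (cases rule: fstep.cases) (use False in auto)
    then obtain e' where e': "fstep D e e'" "w = Call e' m es" by blast
    from Suc.IH[of e'] w2 e' Suc.prems(2) obtain a v0 where
      H: "a \<le> n" "fval v0" "(fstep D ^^ a) e' v0" "(fstep D ^^ (n - a)) (Call v0 m es) v" by auto
    have "(fstep D ^^ Suc a) e v0" using e'(1) H(3) relpowp_Suc_I2 by metis
    then show ?thesis using H by (intro exI[of _ "Suc a"] exI[of _ v0]) auto
  qed
qed

lemma field_recv_steps:
  "(fstep D ^^ n) (Field e f) v \<Longrightarrow> fval v \<Longrightarrow>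
   \<exists>a v0. a \<le> n \<and> fval v0 \<and> (fstep D ^^ a) e v0 \<and> (fstep D ^^ (n - a)) (Field v0 f) v"
proof (induction n arbitrary: e)
  case 0
  then show ?case by (auto elim: relpowp_0_E)
next
  case (Suc n)
  show ?case
  proof (cases "fval e")
    case True
    then show ?thesis using Suc.prems by (intro exI[of _ 0] exI[of _ e]) auto
  next
    case False
    from Suc.prems(1) obtain w where w1: "fstep D (Field e f) w" and w2: "(fstep D ^^ n) w v"
      by (rule relpowp_Suc_E2)
    from w1 have "\<exists>e'. fstep D e e' \<and> w = Field e' f"
      by (cases rule: fstep.cases) (use False in auto)
    then obtain e' where e': "fstep D e e'" "w = Field e' f" by blast
    from Suc.IH[of e'] w2 e' Suc.prems(2) obtain a v0 where
      H: "a \<le> n" "fval v0" "(fstep D ^^ a) e' v0" "(fstep D ^^ (n - a)) (Field v0 f) v" by auto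
    have "(fstep D ^^ Suc a) e v0" using e'(1) H(3) relpowp_Suc_I2 by metis
    then show ?thesis using H by (intro exI[of _ "Suc a"] exI[of _ v0]) auto
  qed
qed

lemma assert_recv_steps:
  "(fstep D ^^ n) (Assert e t) v \<Longrightarrow> fval v \<Longrightarrow>
   \<exists>a v0. a \<le> n \<and> fval v0 \<and> (fstep D ^^ a) e v0 \<and> (fstep D ^^ (n - a)) (Assert v0 t) v"
proof (induction n arbitrary: e)
  case 0
  then show ?case by (auto elim: relpowp_0_E)
next
  case (Suc n)
  show ?case
  proof (cases "fval e")
    case True
    then show ?thesis using Suc.prems by (intro exI[of _ 0] exI[of _ e]) auto
  next
    case False
    from Suc.prems(1) obtain w where w1: "fstep D (Assert e t) w" and w2: "(fstep D ^^ n) w v"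
      by (rule relpowp_Suc_E2)
    from w1 have "\<exists>e'. fstep D e e' \<and> w = Assert e' t"
      by (cases rule: fstep.cases) (use False in auto)
    then obtain e' where e': "fstep D e e'" "w = Assert e' t" by blast
    from Suc.IH[of e'] w2 e' Suc.prems(2) obtain a v0 where
      H: "a \<le> n" "fval v0" "(fstep D ^^ a) e' v0" "(fstep D ^^ (n - a)) (Assert v0 t) v" by auto
    have "(fstep D ^^ Suc a) e v0" using e'(1) H(3) relpowp_Suc_I2 by metis
    then show ?thesis using H by (intro exI[of _ "Suc a"] exI[of _ v0]) auto
  qed
qed

lemma callval_steps:
  assumes "(fstep D ^^ n) (Call v0 m vs) v" "fval v" "fval v0" "list_all fval vs"
  shows "\<exists>n' s vs0 x ps t b. n = Suc n' \<and> v0 = SLit s vs0 \<and> Func x s m (ps, t) b \<in> set D \<and> length vs = length ps \<and>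
      (fstep D ^^ n') (fsubst (upds (Var(x := SLit s vs0)) (map fst ps) vs) b) v"
proof (cases n)
  case 0
  then show ?thesis using assms by (cases v) auto
next
  case (Suc n')
  from assms(1) obtain w where w1: "fstep D (Call v0 m vs) w" and w2: "(fstep D ^^ n') w v"
    unfolding Suc by (rule relpowp_Suc_E2)
  from w1 show ?thesis
  proof (cases rule: fstep.cases)
    case call
    then show ?thesis using w2 Suc by blast
  next
    case ctx_recv
    then show ?thesis using fval_nostep assms(3) by blast
  next
    case ctx_arg
    then show ?thesis using assms(4) by (auto dest: fval_nostep)
  qed
qed

lemma fieldval_steps:
  assumes "(fstep D ^^ n) (Field v0 f) v" "fval v" "fval v0"
  shows "\<exists>s vs fs i. n = 1 \<and> v0 = SLit s vs \<and> TypeStruct s fs \<in> set D \<and> length vs = length fs \<and>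
     i < length fs \<and> fst (fs ! i) = f \<and> v = vs ! i"
proof (cases n)
  case 0
  then show ?thesis using assms by (cases v) auto
next
  case (Suc n')
  from assms(1) obtain w where w1: "fstep D (Field v0 f) w" and w2: "(fstep D ^^ n') w v"
    unfolding Suc by (rule relpowp_Suc_E2)
  from w1 show ?thesis
  proof (cases rule: fstep.cases)
    case field
    then have "fval w" by (simp add: list_all_length)
    then have "n' = 0 \<and> v = w" using fval_steps w2 by blast
    moreover have "n = 1" using calculation Suc by simp
    ultimately show ?thesis using field by blast
  next
    case ctx_field
    then show ?thesis using fval_nostep assms(3) by blast
  qed
qed

lemma assertval_steps:
  assumes "(fstep D ^^ n) (Assert v0 t) v" "fval v" "fval v0"
  shows "\<exists>s vs. n = 1 \<and> v0 = SLit s vs \<and> v = v0 \<and> subtype D (TS s) t"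
proof (cases n)
  case 0
  then show ?thesis using assms by (cases v) auto
next
  case (Suc n')
  from assms(1) obtain w where w1: "fstep D (Assert v0 t) w" and w2: "(fstep D ^^ n') w v"
    unfolding Suc by (rule relpowp_Suc_E2)
  from w1 show ?thesis
  proof (cases rule: fstep.cases)
    case assert
    then have "n' = 0 \<and> v = w" using fval_steps w2 assms(3) by blast
    moreover have "n = 1" using calculation Suc by simp
    ultimately show ?thesis using assert by blast
  next
    case ctx_assert
    then show ?thesis using fval_nostep assms(3) by blast
  qed
qed


section \<open>Logical relation lemmas\<close>

lemma vfam_lt: "j < k \<Longrightarrow> vfam D \<sigma>m k j = vrel D \<sigma>m j"
proof (induction k)
  case 0 then show ?case by simp
next
  case (Suc n)
  show ?case
  proof (cases "j = n")
    case True then show ?thesis by (simp add: vrel_def)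
  next
    case False then show ?thesis using Suc by simp
  qed
qed

lemma erelP_cong: "(\<And>j. j \<le> k \<Longrightarrow> P j = Q j) \<Longrightarrow> erelP D \<sigma>m P k t e E = erelP D \<sigma>m Q k t e E"
  unfolding erelP_def by (intro iffI allI impI) (simp_all add: diff_le_self le_trans[OF diff_le_self])

lemma mrelP_cong: "(\<And>j. j \<le> k \<Longrightarrow> P j = Q j) \<Longrightarrow> mrelP D \<sigma>m P k S d V = mrelP D \<sigma>m Q k S d V"
proof -
  assume H: "\<And>j. j \<le> k \<Longrightarrow> P j = Q j"
  obtain m ps t where S: "S = (m, (ps, t))" by (metis prod.collapse)
  show ?thesis
  proof (cases d)
    case (Func x s m' M' e)
    have E: "\<And>k'. k' \<le> k \<Longrightarrow> erelP D \<sigma>m P k' = erelP D \<sigma>m Q k'"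
      using erelP_cong H by (intro ext) (meson le_trans)
    show ?thesis unfolding S Func mrelP.simps
      apply (intro conj_cong refl)
      apply (intro iffI allI impI)
      using H E by (auto simp del: erelP_def)
  qed (simp_all add: S)
qed

lemma mrelP_vfam: "j < k \<Longrightarrow> mrelP D \<sigma>m (vfam D \<sigma>m k) j S d V = mrel D \<sigma>m j S d V"
  unfolding mrel_def by (rule mrelP_cong) (simp add: vfam_lt)

lemma mrelP_mono: "mrelP D \<sigma>m P k S d V \<Longrightarrow> j \<le> k \<Longrightarrow> mrelP D \<sigma>m P j S d V"
proof -
  assume a: "mrelP D \<sigma>m P k S d V" "j \<le> k"
  obtain m ps t where S: "S = (m, (ps, t))" by (metis prod.collapse)
  show ?thesis
  proof (cases d)
    case (Func x s m' M' e)
    show ?thesis using a unfolding S Func mrelP.simps by (meson le_trans)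
  qed (use a S in simp_all)
qed

lemma mrel_mono: "mrel D \<sigma>m k S d V \<Longrightarrow> j \<le> k \<Longrightarrow> mrel D \<sigma>m j S d V"
  unfolding mrel_def using mrelP_mono by blast

lemma vrel_mono_aux: "vrelF D \<sigma>m k P t v V \<Longrightarrow> P = vfam D \<sigma>m k \<Longrightarrow> j \<le> k \<Longrightarrow> vrelF D \<sigma>m j (vfam D \<sigma>m j) t v V"
proof (induction rule: vrelF.induct)
  case (vstruct s fs vs Vs)
  then show ?case by (intro vrelF.vstruct) auto
next
  case (viface tI Ss Vms v V u Vs')
  show ?case
  proof (rule vrelF.viface)
    show "\<forall>k1<j. vfam D \<sigma>m j k1 (TS u) v V"
      using viface by (simp add: vfam_lt)
    show "\<forall>k2<j. \<forall>i<length Ss. \<exists>d. method_lookup D (fst (Ss ! i)) u d \<and> mrelP D \<sigma>m (vfam D \<sigma>m j) k2 (Ss ! i) d (Vms ! i)"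
      using viface by (simp add: mrelP_vfam)
  qed (use viface in auto)
qed

lemma vrel_mono: "vrel D \<sigma>m k t v V \<Longrightarrow> j \<le> k \<Longrightarrow> vrel D \<sigma>m j t v V"
  unfolding vrel_def using vrel_mono_aux by blast

lemma vrel_vals_aux: "vrelF D \<sigma>m k P t v V \<Longrightarrow> fval v \<and> tval V"
proof (induction rule: vrelF.induct)
  case (vstruct s fs vs Vs)
  then have "list_all fval vs" "list_all tval Vs" by (auto simp: list_all_length)
  then show ?case using tval_tuple[of Vs] by (simp add: tval_def)
next
  case (viface tI Ss Vms v V u Vs')
  then have "tval (tuple (V # Vms))" using tval_tuple by simp
  then show ?case using viface(3) by (simp add: tval_def)
qed

lemma vrel_vals: "vrel D \<sigma>m k t v V \<Longrightarrow> fval v \<and> tval V"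
  unfolding vrel_def by (rule vrel_vals_aux)

lemma vrel_struct_inv:
  assumes "vrel D \<sigma>m k (TS s) v V"
  shows "\<exists>fs vs Vs. TypeStruct s fs \<in> set D \<and> v = SLit s vs \<and> V = TApp (TCon (KS s)) (tuple Vs) \<and>
    length vs = length fs \<and> length Vs = length fs \<and> (\<forall>i < length fs. vrel D \<sigma>m k (snd (fs ! i)) (vs ! i) (Vs ! i))"
  using assms[unfolded vrel_def] by (cases rule: vrelF.cases) (auto simp: vrel_def)

lemma vrel_iface_inv:
  assumes "vrel D \<sigma>m k (TI tI) v V"
  shows "\<exists>Ss W Vms u Vs'. TypeIface tI Ss \<in> set D \<and> length Vms = length Ss \<and> fval v \<and> tval W \<and>
     W = capp (KS u) Vs' \<and> list_all tval Vms \<and> V = TApp (TCon (KI tI)) (tuple (W # Vms)) \<and>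
     (\<forall>k1<k. vrel D \<sigma>m k1 (TS u) v W) \<and>
     (\<forall>k2<k. \<forall>i<length Ss. \<exists>d. method_lookup D (fst (Ss ! i)) u d \<and> mrel D \<sigma>m k2 (Ss ! i) d (Vms ! i))"
  using assms[unfolded vrel_def]
proof (cases rule: vrelF.cases)
  case (viface Ss Vms V' u Vs')
  show ?thesis
    apply (rule exI[of _ Ss], rule exI[of _ V'], rule exI[of _ Vms], rule exI[of _ u], rule exI[of _ Vs'])
    using viface by (simp add: vfam_lt mrelP_vfam)
qed

lemma vrel_iface_intro:
  assumes "TypeIface tI Ss \<in> set D" "length Vms = length Ss" "fval v" "tval W"
     "W = capp (KS u) Vs'" "list_all tval Vms"
     "\<forall>k1<k. vrel D \<sigma>m k1 (TS u) v W"
     "\<forall>k2<k. \<forall>i<length Ss. \<exists>d. method_lookup D (fst (Ss ! i)) u d \<and> mrel D \<sigma>m k2 (Ss ! i) d (Vms ! i)"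
  shows "vrel D \<sigma>m k (TI tI) v (TApp (TCon (KI tI)) (tuple (W # Vms)))"
  unfolding vrel_def
  by (rule vrelF.viface) (use assms in \<open>simp_all add: vfam_lt mrelP_vfam\<close>)

lemma vrel_struct_intro:
  assumes "TypeStruct s fs \<in> set D" "length vs = length fs" "length Vs = length fs"
    "\<forall>i < length fs. vrel D \<sigma>m k (snd (fs ! i)) (vs ! i) (Vs ! i)"
  shows "vrel D \<sigma>m k (TS s) (SLit s vs) (TApp (TCon (KS s)) (tuple Vs))"
  unfolding vrel_def by (rule vrelF.vstruct) (use assms in \<open>simp_all add: vrel_def\<close>)

lemma erel_D: "erel D \<sigma>m k t e E \<Longrightarrow> n1 + n < k \<Longrightarrow> (fstep D ^^ n1) e v \<Longrightarrow> fval v \<Longrightarrow>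
   (tstep \<sigma>m ^^ n) E V \<Longrightarrow> tval V \<Longrightarrow> vrel D \<sigma>m (k - n1 - n) t v V"
proof -
  assume H: "erel D \<sigma>m k t e E" and a: "n1 + n < k" "(fstep D ^^ n1) e v" "fval v" "(tstep \<sigma>m ^^ n) E V" "tval V"
  have l: "n1 < k" "n < k" using a(1) by arith+
  have f: "fsteps_le D n1 e v" using a unfolding fsteps_le_def by blast
  have t: "tsteps_le \<sigma>m n E V" using a unfolding tsteps_le_def by blast
  show ?thesis using H[unfolded erel_def erelP_def, rule_format, OF l a(1) f t] by simp
qed

lemma erel_I: "(\<And>n1 n v V. n1 + n < k \<Longrightarrow> (fstep D ^^ n1) e v \<Longrightarrow> fval v \<Longrightarrow>
   (tstep \<sigma>m ^^ n) E V \<Longrightarrow> tval V \<Longrightarrow> vrel D \<sigma>m (k - n1 - n) t v V) \<Longrightarrow> erel D \<sigma>m k t e E"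
  unfolding erel_def erelP_def fsteps_le_def tsteps_le_def
proof (intro allI impI)
  fix k1 k2 v V
  assume H: "\<And>n1 n v V. n1 + n < k \<Longrightarrow> (fstep D ^^ n1) e v \<Longrightarrow> fval v \<Longrightarrow>
   (tstep \<sigma>m ^^ n) E V \<Longrightarrow> tval V \<Longrightarrow> vrel D \<sigma>m (k - n1 - n) t v V"
    and a: "k1 < k" "k2 < k" "k1 + k2 < k" "fval v \<and> (\<exists>j\<le>k1. (fstep D ^^ j) e v)"
      "tval V \<and> (\<exists>j\<le>k2. (tstep \<sigma>m ^^ j) E V)"
  then obtain j1 j2 where j: "j1 \<le> k1" "(fstep D ^^ j1) e v" "j2 \<le> k2" "(tstep \<sigma>m ^^ j2) E V" by blast
  have "vrel D \<sigma>m (k - j1 - j2) t v V" using H[OF _ j(2) _ j(4)] a j by simp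
  then show "vrel D \<sigma>m (k - k1 - k2) t v V" by (rule vrel_mono) (use j in simp)
qed

section \<open>Well-formedness consequences\<close>

lemma distinct_concat_map_uniq:
  "distinct (concat (map f xs)) \<Longrightarrow> x \<in> set xs \<Longrightarrow> y \<in> set xs \<Longrightarrow> f x = [a] \<Longrightarrow> f y = [a] \<Longrightarrow> x = y"
proof (induction xs)
  case Nil then show ?case by simp
next
  case (Cons z zs)
  have d: "distinct (f z @ concat (map f zs))" using Cons.prems(1) by simp
  show ?case
  proof (cases "x = z")
    case True
    show ?thesis
    proof (cases "y = z")
      case True then show ?thesis using \<open>x = z\<close> by simp
    next
      case False
      then have "y \<in> set zs" using Cons.prems by simp
      then have "a \<in> set (concat (map f zs))" using Cons.prems(5) by force
      moreover have "a \<in> set (f z)" using Cons.prems(4) True by simp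
      ultimately show ?thesis using d by auto
    qed
  next
    case False
    then have xz: "x \<in> set zs" using Cons.prems by simp
    show ?thesis
    proof (cases "y = z")
      case True
      have "a \<in> set (concat (map f zs))" using Cons.prems(4) xz by force
      moreover have "a \<in> set (f z)" using Cons.prems(5) True by simp
      ultimately show ?thesis using d by auto
    next
      case False
      then have "y \<in> set zs" using Cons.prems by simp
      then show ?thesis using Cons xz d by simp
    qed
  qed
qed

lemma uniq_struct: "wf_decls D \<Longrightarrow> TypeStruct s fs \<in> set D \<Longrightarrow> TypeStruct s fs' \<in> set D \<Longrightarrow> fs = fs'"
  using distinct_concat_map_uniq[of "\<lambda>d. case d of TypeStruct s fs \<Rightarrow> [s] | _ \<Rightarrow> []" D "TypeStruct s fs" "TypeStruct s fs'" s]
  unfolding wf_decls_def struct_names_def by simp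

lemma uniq_iface: "wf_decls D \<Longrightarrow> TypeIface t Ss \<in> set D \<Longrightarrow> TypeIface t Ss' \<in> set D \<Longrightarrow> Ss = Ss'"
  using distinct_concat_map_uniq[of "\<lambda>d. case d of TypeIface t Ss \<Rightarrow> [t] | _ \<Rightarrow> []" D "TypeIface t Ss" "TypeIface t Ss'" t]
  unfolding wf_decls_def iface_names_def by simp

lemma uniq_func: "wf_decls D \<Longrightarrow> Func x s m M e \<in> set D \<Longrightarrow> Func x' s m M' e' \<in> set D \<Longrightarrow> x = x' \<and> M = M' \<and> e = e'"
  using distinct_concat_map_uniq[of "\<lambda>d. case d of Func x s m M e \<Rightarrow> [(s, m)] | _ \<Rightarrow> []" D "Func x s m M e" "Func x' s m M' e'" "(s, m)"]
  unfolding wf_decls_def func_keys_def by simp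

lemma uniq_field: "wf_decls D \<Longrightarrow> TypeStruct s fs \<in> set D \<Longrightarrow> i < length fs \<Longrightarrow> j < length fs \<Longrightarrow>
   fst (fs ! i) = fst (fs ! j) \<Longrightarrow> i = j"
  unfolding wf_decls_def using nth_eq_iff_index_eq[of "map fst fs" i j] by auto


section \<open>Translation properties\<close>

declare upt_Suc[simp del]

lemma VAux_in_range: "1 \<le> j \<Longrightarrow> j < n \<Longrightarrow> VAux j \<in> set (map VAux [1..<n])"
  by simp

lemma distinct_VAux: "distinct (map VAux [a..<b])"
  by (simp add: distinct_map inj_on_def)

lemma fv_case_tup: "fv (case_tup E K xs b) = fv E \<union> (fv b - set xs - {VAux 0})"
  by (auto simp: case_tup_def)

lemma dbind_case_tup: "dbind (case_tup E K xs b) = (dbind E \<and> distinct xs \<and> dbind b)"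
  by (simp add: case_tup_def)

lemma lam_case_tup_closed: "fv b \<subseteq> set xs \<Longrightarrow> dbind b \<Longrightarrow> distinct xs \<Longrightarrow>
  fv (TLam (VAux 0) (case_tup (TVar (VAux 0)) K xs b)) = {} \<and> dbind (TLam (VAux 0) (case_tup (TVar (VAux 0)) K xs b))"
  by (auto simp: fv_case_tup dbind_case_tup)

lemma subty_closed: "subty_tr D t u E \<Longrightarrow> fv E = {} \<and> dbind E"
proof (induction rule: subty_tr.induct)
  case (struct_iface tI Ss s)
  have "fv (tuple (TVar (VAux 0) # map (\<lambda>(m, M). TMeth m s) Ss)) = {VAux 0}"
    by (auto simp: fv_tuple split: prod.splits)
  moreover have "dbind (tuple (TVar (VAux 0) # map (\<lambda>(m, M). TMeth m s) Ss))"
    by (auto simp: dbind_tuple list_all_iff split: prod.splits)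
  ultimately show ?case by simp
next
  case (iface_iface tI Rs uI Ss \<pi>)
  define b where "b = TApp (TCon (KI uI)) (tuple (TVar (VAux 1) # map (\<lambda>i. TVar (VAux (\<pi> i + 2))) [0..<length Ss]))"
  have "fv b \<subseteq> set (map VAux [1..<length Rs + 2])"
  proof
    fix y assume "y \<in> fv b"
    then have "y = VAux 1 \<or> (\<exists>i < length Ss. y = VAux (\<pi> i + 2))"
      unfolding b_def by (auto simp: fv_tuple)
    then show "y \<in> set (map VAux [1..<length Rs + 2])"
    proof
      assume "y = VAux 1"
      then show ?thesis using VAux_in_range[of 1 "length Rs + 2"] by simp
    next
      assume "\<exists>i<length Ss. y = VAux (\<pi> i + 2)"
      then obtain i where i: "i < length Ss" "y = VAux (\<pi> i + 2)" by blast
      then have "\<pi> i < length Rs" using iface_iface(3) by blast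
      then show ?thesis using VAux_in_range[of "\<pi> i + 2" "length Rs + 2"] i by simp
    qed
  qed
  moreover have "dbind b" unfolding b_def by (auto simp: dbind_tuple list_all_iff)
  moreover have "distinct (map VAux [1..<length Rs + 2])" by (rule distinct_VAux)
  ultimately show ?case unfolding b_def[symmetric] by (rule lam_case_tup_closed)
qed

lemma destr_closed: "destr_tr D tI u E \<Longrightarrow> fv E = {} \<and> dbind E"
proof (induction rule: destr_tr.induct)
  case (to_struct tI Rs s)
  define b where "b = TCase (TVar (VAux 1)) [((KS s, [VAux (length Rs + 2)]), TApp (TCon (KS s)) (TVar (VAux (length Rs + 2))))]"
  have "fv b = {VAux 1}" unfolding b_def by auto
  moreover have "VAux 1 \<in> set (map VAux [1..<length Rs + 2])" using VAux_in_range[of 1 "length Rs + 2"] by simp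
  ultimately have "fv b \<subseteq> set (map VAux [1..<length Rs + 2])" by simp
  moreover have "dbind b" unfolding b_def by simp
  moreover have "distinct (map VAux [1..<length Rs + 2])" by (rule distinct_VAux)
  ultimately show ?case unfolding b_def[symmetric] by (rule lam_case_tup_closed)
next
  case (to_iface tI Rs uI cls)
  define b where "b = TCase (TVar (VAux 1)) cls"
  have cl: "fv (snd c) - set (snd (fst c)) = {} \<and> distinct (snd (fst c)) \<and> dbind (snd c)" if c: "c \<in> set cls" for c
  proof -
    from c obtain i where i: "i < length cls" "c = cls ! i" by (metis in_set_conv_nth)
    have "length (structs_sub D uI) = length cls" using to_iface(2) list_all2_lengthD by blast
    then have i2: "i < length (structs_sub D uI)" using i by simp
    from list_all2_nthD[OF to_iface(2) i2] obtain Ej where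
      Ej: "subty_tr D (TS (structs_sub D uI ! i)) (TI uI) Ej"
        "cls ! i = ((KS (structs_sub D uI ! i), [VAux (length Rs + 2)]),
                          TApp Ej (TApp (TCon (KS (structs_sub D uI ! i))) (TVar (VAux (length Rs + 2)))))"
      by blast
    have cE: "fv Ej = {} \<and> dbind Ej" by (rule subty_closed[OF Ej(1)])
    show ?thesis unfolding i(2) Ej(2) using cE by simp
  qed
  have "fv b = {VAux 1}"
  proof -
    have "\<forall>c \<in> set cls. fv (snd c) - set (snd (fst c)) = {}" using cl by blast
    then have "\<Union> ((\<lambda>c. fv (snd c) - set (snd (fst c))) ` set cls) = {}" by blast
    then show ?thesis unfolding b_def fv.simps set_map by auto
  qed
  moreover have "VAux 1 \<in> set (map VAux [1..<length Rs + 2])" using VAux_in_range[of 1 "length Rs + 2"] by simp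
  ultimately have "fv b \<subseteq> set (map VAux [1..<length Rs + 2])" by simp
  moreover have "dbind b" unfolding b_def using cl by simp
  moreover have "distinct (map VAux [1..<length Rs + 2])" by (rule distinct_VAux)
  ultimately show ?case unfolding b_def[symmetric] by (rule lam_case_tup_closed)
qed

lemma trans_fv: "fg_trans D \<Delta> e t E \<Longrightarrow> fv E \<subseteq> VX ` dom \<Delta>"
proof (induction rule: fg_trans.induct)
  case (tr_var x t)
  then show ?case by auto
next
  case (tr_struct s fs es Es)
  have "\<forall>E \<in> set Es. fv E \<subseteq> VX ` dom \<Delta>"
  proof
    fix E0 assume "E0 \<in> set Es"
    then obtain i where "i < length Es" "E0 = Es ! i" by (metis in_set_conv_nth)
    then show "fv E0 \<subseteq> VX ` dom \<Delta>" using tr_struct by auto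
  qed
  then show ?case by (auto simp: fv_tuple)
next
  case (tr_access e s E fs i f)
  have "fv E \<subseteq> VX ` dom \<Delta>" by fact
  moreover have "VAux (i + 1) \<in> set (map VAux [1..<length fs + 1])"
    by (rule VAux_in_range) (use tr_access in simp_all)
  ultimately show ?case by (auto simp: fv_case_tup)
next
  case (tr_call_struct m ps t s e E es Es)
  have "\<forall>E \<in> set Es. fv E \<subseteq> VX ` dom \<Delta>"
  proof
    fix E0 assume "E0 \<in> set Es"
    then obtain i where "i < length Es" "E0 = Es ! i" by (metis in_set_conv_nth)
    then show "fv E0 \<subseteq> VX ` dom \<Delta>" using tr_call_struct by auto
  qed
  moreover have "fv E \<subseteq> VX ` dom \<Delta>" by fact
  ultimately show ?case by (auto simp: fv_tuple)
next
  case (tr_call_iface e tI E Ss j m ps t es Es)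
  have "\<forall>E \<in> set Es. fv E \<subseteq> VX ` dom \<Delta>"
  proof
    fix E0 assume "E0 \<in> set Es"
    then obtain i where "i < length Es" "E0 = Es ! i" by (metis in_set_conv_nth)
    then show "fv E0 \<subseteq> VX ` dom \<Delta>" using tr_call_iface by auto
  qed
  moreover have "j < length Ss" using tr_call_iface by blast
  ultimately have "fv (TApp (TApp (TVar (VAux (j + 2))) (TVar (VAux 1))) (tuple Es)) - set (map VAux [1..<length Ss + 2]) - {VAux 0}
        \<subseteq> VX ` dom \<Delta>"
    by (auto simp: fv_tuple)
  moreover have "fv E \<subseteq> VX ` dom \<Delta>" by fact
  ultimately show ?case by (simp add: fv_case_tup)
next
  case (tr_sub e t E2 u E1)
  have "fv E1 = {}" using subty_closed[OF tr_sub(2)] by blast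
  moreover have "fv E2 \<subseteq> VX ` dom \<Delta>" by fact
  ultimately show ?case by simp
next
  case (tr_assert e tI E2 u E1)
  have "fv E1 = {}" using destr_closed[OF tr_assert(2)] by blast
  moreover have "fv E2 \<subseteq> VX ` dom \<Delta>" by fact
  ultimately show ?case by simp
qed

lemma tval_TApp_TCon: "tval (TApp (TCon K) X) = tval X" by (simp add: tval_def)

lemma steps_det: assumes "(R ^^ n) x y" "n \<noteq> 0" "\<And>z. R x z \<Longrightarrow> z = x'"
  shows "(R ^^ (n - 1)) x' y"
proof -
  obtain m where n: "n = Suc m" using assms(2) by (cases n) auto
  from assms(1) obtain z where "R x z" "(R ^^ m) z y" unfolding n by (rule relpowp_Suc_E2)
  then show ?thesis using assms(3) n by auto
qed

lemma steps_nz: "(R ^^ n) x y \<Longrightarrow> x \<noteq> y \<Longrightarrow> n \<noteq> 0"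
  by (metis relpowp_0_E)

lemma case_var:
  assumes "vrel D \<sigma>m k t v V"
  shows "erel D \<sigma>m k t v V"
proof (rule erel_I)
  fix n1 n v' V'
  assume a: "n1 + n < k" "(fstep D ^^ n1) v v'" "fval v'" "(tstep \<sigma>m ^^ n) V V'" "tval V'"
  have vals: "fval v" "tval V" using vrel_vals[OF assms] by auto
  have "n1 = 0 \<and> v' = v" using fval_steps[OF a(2) vals(1)] .
  moreover have "n = 0 \<and> V' = V" using tval_steps[OF a(4) vals(2)] .
  ultimately show "vrel D \<sigma>m (k - n1 - n) t v' V'" using assms by simp
qed

lemma case_struct:
  assumes "TypeStruct s fs \<in> set D" "length es = length fs" "length Es = length fs"
    "\<forall>i<length fs. erel D \<sigma>m k (snd (fs ! i)) (es ! i) (Es ! i)"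
  shows "erel D \<sigma>m k (TS s) (SLit s es) (TApp (TCon (KS s)) (tuple Es))"
proof (rule erel_I)
  fix n1 n v V
  assume a: "n1 + n < k" "(fstep D ^^ n1) (SLit s es) v" "fval v" "(tstep \<sigma>m ^^ n) (TApp (TCon (KS s)) (tuple Es)) V" "tval V"
  obtain vs ns1 where F: "length vs = length es" "length ns1 = length es" "list_all fval vs"
       "\<forall>i < length es. (fstep D ^^ (ns1 ! i)) (es ! i) (vs ! i)" "sum_list ns1 = n1" "v = SLit s vs"
    using lit_steps[OF a(2,3)] by blast
  obtain b Vx where T1: "b \<le> n" "tval Vx" "(tstep \<sigma>m ^^ b) (tuple Es) Vx" "(tstep \<sigma>m ^^ (n - b)) (TApp (TCon (KS s)) Vx) V"
    using app_outer_steps[OF a(4,5)] by blast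
  have "tval (TApp (TCon (KS s)) Vx)" using T1(2) by (simp add: tval_def)
  then have T2: "n - b = 0" "V = TApp (TCon (KS s)) Vx" using tval_steps[OF T1(4)] by auto
  obtain Vs ns2 where T3: "length Vs = length Es" "length ns2 = length Es" "list_all tval Vs"
       "\<forall>i < length Es. (tstep \<sigma>m ^^ (ns2 ! i)) (Es ! i) (Vs ! i)" "sum_list ns2 = b" "Vx = tuple Vs"
    using tuple_steps[OF T1(3) T1(2)] by blast
  have rel: "\<forall>i<length fs. vrel D \<sigma>m (k - n1 - n) (snd (fs ! i)) (vs ! i) (Vs ! i)"
  proof (intro allI impI)
    fix i assume i: "i < length fs"
    have l1: "ns1 ! i \<le> n1" using elem_le_sum_list[of i ns1] F(2,5) i assms(2) by simp
    have l2: "ns2 ! i \<le> n" using elem_le_sum_list[of i ns2] T3(2,5) T1(1) i assms(3) by simp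
    have "vrel D \<sigma>m (k - ns1 ! i - ns2 ! i) (snd (fs ! i)) (vs ! i) (Vs ! i)"
      apply (rule erel_D[OF assms(4)[rule_format, OF i]])
      using l1 l2 a(1) apply simp
      using F(4) i assms(2) apply simp
      using F(3,1) i assms(2) apply (simp add: list_all_length)
      using T3(4) i assms(3) apply simp
      using T3(3,1) i assms(3) by (simp add: list_all_length)
    then show "vrel D \<sigma>m (k - n1 - n) (snd (fs ! i)) (vs ! i) (Vs ! i)"
      by (rule vrel_mono) (use l1 l2 in simp)
  qed
  show "vrel D \<sigma>m (k - n1 - n) (TS s) v V"
    unfolding F(6) T2(2) T3(6)
    by (rule vrel_struct_intro[OF assms(1)]) (use F(1) T3(1) assms(2,3) rel in simp_all)
qed


lemma tsubst_case_single:
  assumes "distinct xs" "length xs = length Vs" "i < length xs"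
  shows "tsubst (upds TVar xs Vs) (TVar (xs ! i)) = Vs ! i"
  using upds_nth[OF assms(1,2,3)] by simp


lemma case_access:
  assumes wf: "wf_decls D"
    and IH: "erel D \<sigma>m k (TS s) e E" and fs: "TypeStruct s fs \<in> set D" and i: "i < length fs" and f: "fst (fs ! i) = f"
  shows "erel D \<sigma>m k (snd (fs ! i)) (Field e f)
           (case_tup E (KS s) (map VAux [1..<length fs + 1]) (TVar (VAux (i + 1))))"
proof (rule erel_I)
  fix n1 n v V
  define xs where "xs = map VAux [1..<length fs + 1]"
  have xs: "distinct xs" "length xs = length fs" "xs ! i = VAux (i + 1)"
    unfolding xs_def using distinct_VAux i by (simp_all add: nth_upt)
  define inner where "inner = TCase (TVar (VAux 0)) [((KTup (length xs), xs), TVar (VAux (i + 1)))]"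
  assume a: "n1 + n < k" "(fstep D ^^ n1) (Field e f) v" "fval v"
    "(tstep \<sigma>m ^^ n) (case_tup E (KS s) (map VAux [1..<length fs + 1]) (TVar (VAux (i + 1)))) V" "tval V"
  have a4: "(tstep \<sigma>m ^^ n) (TCase E [((KS s, [VAux 0]), inner)]) V"
    using a(4) unfolding case_tup_def inner_def xs_def .
  obtain a1 v0 where F1: "a1 \<le> n1" "fval v0" "(fstep D ^^ a1) e v0" "(fstep D ^^ (n1 - a1)) (Field v0 f) v"
    using field_recv_steps[OF a(2,3)] by blast
  obtain a2 V0 where T1: "a2 < n" "tval V0" "(tstep \<sigma>m ^^ a2) E V0" "(tstep \<sigma>m ^^ (n - a2)) (TCase V0 [((KS s, [VAux 0]), inner)]) V"
    using case_steps[OF a4 a(5)] by blast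
  have R0: "vrel D \<sigma>m (k - a1 - a2) (TS s) v0 V0"
    by (rule erel_D[OF IH _ F1(3) F1(2) T1(3) T1(2)]) (use a(1) F1(1) T1(1) in simp)
  obtain fs' vs Vs where S: "TypeStruct s fs' \<in> set D" "v0 = SLit s vs" "V0 = TApp (TCon (KS s)) (tuple Vs)"
    "length vs = length fs'" "length Vs = length fs'" "\<forall>i < length fs'. vrel D \<sigma>m (k - a1 - a2) (snd (fs' ! i)) (vs ! i) (Vs ! i)"
    using vrel_struct_inv[OF R0] by blast
  have fs': "fs' = fs" using uniq_struct[OF wf S(1) fs] .
  obtain s2 vs2 fs2 i2 where F2: "n1 - a1 = 1" "v0 = SLit s2 vs2" "TypeStruct s2 fs2 \<in> set D" "length vs2 = length fs2"
     "i2 < length fs2" "fst (fs2 ! i2) = f" "v = vs2 ! i2"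
    using fieldval_steps[OF F1(4) a(3) F1(2)] by blast
  have "s2 = s" "vs2 = vs" using F2(2) S(2) by auto
  then have fs2: "fs2 = fs" using uniq_struct[OF wf F2(3)] fs by simp
  have i2: "i2 = i" using uniq_field[OF wf fs] F2(5,6) fs2 i f by simp
  have vv: "v = vs ! i" using F2(7) i2 \<open>vs2 = vs\<close> by simp
  have VsT: "list_all tval Vs"
  proof -
    have "tval V0" by fact
    then show ?thesis unfolding S(3) tval_TApp_TCon tval_tuple .
  qed
  have Vtup: "tuple Vs = capp (KTup (length xs)) Vs" using xs(2) S(5) fs' by (simp add: tuple_def)
  have V0capp: "V0 = capp (KS s) [tuple Vs]" using S(3) by (simp add: capp_single)
  have step1: "W = TCase (tuple Vs) [((KTup (length xs), xs), TVar (VAux (i + 1)))]"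
    if "tstep \<sigma>m (TCase V0 [((KS s, [VAux 0]), inner)]) W" for W
  proof -
    have tv: "list_all tval [tuple Vs]" using VsT by (simp add: tval_tuple)
    from caseval_step[OF that[unfolded V0capp] tv]
    have "W = tsubst (upds TVar [VAux 0] [tuple Vs]) inner" by auto
    also have "\<dots> = TCase (upds TVar [VAux 0] [tuple Vs] (VAux 0)) [((KTup (length xs), xs), TVar (VAux (i + 1)))]"
      unfolding inner_def by (subst tsubst_case1) (use xs i in \<open>simp_all add: xs_def\<close>)
    also have "upds TVar [VAux 0] [tuple Vs] (VAux 0) = tuple Vs" by (simp add: upds_def)
    finally show ?thesis .
  qed
  have step2: "W = Vs ! i"
    if "tstep \<sigma>m (TCase (tuple Vs) [((KTup (length xs), xs), TVar (VAux (i + 1)))]) W" for W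
  proof -
    from caseval_step[OF that[unfolded Vtup] VsT]
    have "W = tsubst (upds TVar xs Vs) (TVar (VAux (i + 1)))" by auto
    then show ?thesis using tsubst_case_single[OF xs(1), of Vs i] xs S(5) fs' i by simp
  qed
  have nt: "\<not> tval (TCase V0 [((KS s, [VAux 0]), inner)])" by (simp add: tval_def)
  have T2: "(tstep \<sigma>m ^^ (n - a2 - 1)) (TCase (tuple Vs) [((KTup (length xs), xs), TVar (VAux (i + 1)))]) V"
    using steps_det[OF T1(4) _ step1] steps_nz[OF T1(4)] nt a(5) by metis
  have nt2: "\<not> tval (TCase (tuple Vs) [((KTup (length xs), xs), TVar (VAux (i + 1)))])" by (simp add: tval_def)
  have T3: "(tstep \<sigma>m ^^ (n - a2 - 1 - 1)) (Vs ! i) V"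
    using steps_det[OF T2 _ step2] steps_nz[OF T2] nt2 a(5) by metis
  have "tval (Vs ! i)" using VsT i S(5) fs' by (simp add: list_all_length)
  then have T4: "n - a2 - 1 - 1 = 0" "V = Vs ! i" using tval_steps[OF T3] by auto
  have "vrel D \<sigma>m (k - a1 - a2) (snd (fs ! i)) (vs ! i) (Vs ! i)" using S(6) fs' i by simp
  then show "vrel D \<sigma>m (k - n1 - n) (snd (fs ! i)) v V"
    unfolding vv T4(2) by (rule vrel_mono) (use F1(1) T1(1) in simp)
qed


lemma mrel_use:
  assumes "mrel D \<sigma>m j (m, (ps, t)) (Func x s m (ps, t) b) V"
    "vrel D \<sigma>m j (TS s) v' V'" "length vs = length ps" "length Vs = length ps"
    "\<forall>i < length ps. vrel D \<sigma>m j (snd (ps ! i)) (vs ! i) (Vs ! i)"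
  shows "erel D \<sigma>m j t (fsubst (upds (Var(x := v')) (map fst ps) vs) b) (TApp (TApp V V') (tuple Vs))"
  using assms unfolding mrel_def erel_def by simp

lemma args_rel:
  assumes "\<forall>i<length ps. erel D \<sigma>m k (snd (ps ! i)) (es ! i) (Es ! i)"
    "length es = length ps" "length Es = length ps"
    "length vs = length ps" "length ns1 = length ps" "list_all fval vs"
    "\<forall>i < length ps. (fstep D ^^ (ns1 ! i)) (es ! i) (vs ! i)"
    "length Vs = length ps" "length ns2 = length ps" "list_all tval Vs"
    "\<forall>i < length ps. (tstep \<sigma>m ^^ (ns2 ! i)) (Es ! i) (Vs ! i)"
    "j + sum_list ns1 + sum_list ns2 < k"
  shows "\<forall>i < length ps. vrel D \<sigma>m (k - sum_list ns1 - sum_list ns2) (snd (ps ! i)) (vs ! i) (Vs ! i)"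
proof (intro allI impI)
  fix i assume i: "i < length ps"
  have l1: "ns1 ! i \<le> sum_list ns1" using elem_le_sum_list[of i ns1] assms(5) i by simp
  have l2: "ns2 ! i \<le> sum_list ns2" using elem_le_sum_list[of i ns2] assms(9) i by simp
  have "vrel D \<sigma>m (k - ns1 ! i - ns2 ! i) (snd (ps ! i)) (vs ! i) (Vs ! i)"
    apply (rule erel_D[OF assms(1)[rule_format, OF i]])
    using l1 l2 assms(12) apply simp
    using assms(7) i apply simp
    using assms(6,4) i apply (simp add: list_all_length)
    using assms(11) i apply simp
    using assms(10,8) i by (simp add: list_all_length)
  then show "vrel D \<sigma>m (k - sum_list ns1 - sum_list ns2) (snd (ps ! i)) (vs ! i) (Vs ! i)"
    by (rule vrel_mono) (use l1 l2 in simp)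
qed

lemma case_call_struct:
  assumes wf: "wf_decls D" and ms: "method_subst \<sigma>m" and dr: "decls_rel D k \<sigma>m"
    and meth: "(m, (ps, t)) \<in> methods D (TS s)"
    and IH: "erel D \<sigma>m k (TS s) e E"
    and len: "length es = length ps" "length Es = length ps"
    and IHs: "\<forall>i<length ps. erel D \<sigma>m k (snd (ps ! i)) (es ! i) (Es ! i)"
  shows "erel D \<sigma>m k t (Call e m es) (TApp (TApp (TMeth m s) E) (tuple Es))"
proof (rule erel_I)
  fix n1 n v V
  assume a: "n1 + n < k" "(fstep D ^^ n1) (Call e m es) v" "fval v"
    "(tstep \<sigma>m ^^ n) (TApp (TApp (TMeth m s) E) (tuple Es)) V" "tval V"
  obtain x body where fn: "Func x s m (ps, t) body \<in> set D" using meth by auto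
  obtain a1 v0 where F1: "a1 \<le> n1" "fval v0" "(fstep D ^^ a1) e v0" "(fstep D ^^ (n1 - a1)) (Call v0 m es) v"
    using call_recv_steps[OF a(2,3)] by blast
  obtain vs ns1 where F2: "length vs = length es" "length ns1 = length es" "list_all fval vs"
       "\<forall>i < length es. (fstep D ^^ (ns1 ! i)) (es ! i) (vs ! i)" "sum_list ns1 \<le> n1 - a1"
       "(fstep D ^^ (n1 - a1 - sum_list ns1)) (Call v0 m vs) v"
    using call_args_steps[OF F1(4) a(3) F1(2)] by blast
  obtain b Vx where T1: "b \<le> n" "tval Vx" "(tstep \<sigma>m ^^ b) (tuple Es) Vx"
      "(tstep \<sigma>m ^^ (n - b)) (TApp (TApp (TMeth m s) E) Vx) V"
    using app_outer_steps[OF a(4,5)] by blast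
  obtain Vs ns2 where T2: "length Vs = length Es" "length ns2 = length Es" "list_all tval Vs"
       "\<forall>i < length Es. (tstep \<sigma>m ^^ (ns2 ! i)) (Es ! i) (Vs ! i)" "sum_list ns2 = b" "Vx = tuple Vs"
    using tuple_steps[OF T1(3) T1(2)] by blast
  obtain a2 V' where T3: "a2 \<le> n - b" "tval V'" "(tstep \<sigma>m ^^ a2) E V'"
      "(tstep \<sigma>m ^^ (n - b - a2)) (TApp (TApp (TMeth m s) V') (tuple Vs)) V"
    using app_inner_steps[OF T1(4)[unfolded T2(6)] a(5) ms] by blast
  obtain c1 s' vs0 x' ps' t' b' where F3: "n1 - a1 - sum_list ns1 = Suc c1" "v0 = SLit s' vs0"
      "Func x' s' m (ps', t') b' \<in> set D" "length vs = length ps'"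
      "(fstep D ^^ c1) (fsubst (upds (Var(x' := SLit s' vs0)) (map fst ps') vs) b') v"
    using callval_steps[OF F2(6) a(3) F1(2) F2(3)] by blast
  define j where "j = k - (a1 + sum_list ns1) - (a2 + b)"
  have R0: "vrel D \<sigma>m (k - a1 - a2) (TS s) v0 V'"
    by (rule erel_D[OF IH _ F1(3) F1(2) T3(3) T3(2)]) (use a(1) F1(1) F2(5) T1(1) T3(1) in simp)
  obtain fs0 vs0' Vs0 where S: "v0 = SLit s vs0'" using vrel_struct_inv[OF R0] by blast
  have s': "s' = s" using S F3(2) by simp
  have same: "x' = x \<and> (ps', t') = (ps, t) \<and> b' = body" using uniq_func[OF wf F3(3)[unfolded s'] fn] by blast
  have R0': "vrel D \<sigma>m j (TS s) v0 V'" by (rule vrel_mono[OF R0]) (simp add: j_def)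
  have Rargs: "\<forall>i < length ps. vrel D \<sigma>m (k - sum_list ns1 - sum_list ns2) (snd (ps ! i)) (vs ! i) (Vs ! i)"
    by (rule args_rel[OF IHs len, of vs ns1 Vs ns2 "a1 + a2"]) (use F2 T2 len a(1) F1(1) T1(1) T3(1) F3(1) in auto)
  have Rargs': "\<forall>i < length ps. vrel D \<sigma>m j (snd (ps ! i)) (vs ! i) (Vs ! i)"
    using Rargs vrel_mono by (smt (verit, best) T2(5) diff_le_mono2 j_def le_add2 add.commute diff_diff_left)
  have "mrel D \<sigma>m k (m, (ps, t)) (Func x s m (ps, t) body) (TMeth m s)"
    using dr fn unfolding decls_rel_def by blast
  then have mr: "mrel D \<sigma>m j (m, (ps, t)) (Func x s m (ps, t) body) (TMeth m s)"
    by (rule mrel_mono) (simp add: j_def)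
  have E: "erel D \<sigma>m j t (fsubst (upds (Var(x := v0)) (map fst ps) vs) body) (TApp (TApp (TMeth m s) V') (tuple Vs))"
    by (rule mrel_use[OF mr R0']) (use F2(1) len T2(1) Rargs' in simp_all)
  have body_steps: "(fstep D ^^ c1) (fsubst (upds (Var(x := v0)) (map fst ps) vs) body) v"
    using F3(5) same F3(2) s' by simp
  have "vrel D \<sigma>m (j - c1 - (n - b - a2)) t v V"
    by (rule erel_D[OF E _ body_steps a(3) T3(4) a(5)])
       (use a(1) F1(1) F2(5) F3(1) T1(1) T3(1) T2(5) j_def in simp)
  then show "vrel D \<sigma>m (k - n1 - n) t v V"
    by (rule vrel_mono) (use a(1) F1(1) F2(5) F3(1) T1(1) T3(1) T2(5) j_def in simp)
qed

lemma tsteps_first: "(tstep \<sigma>m ^^ n) x y \<Longrightarrow> tval y \<Longrightarrow> \<not> tval x \<Longrightarrow>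
   \<exists>z. tstep \<sigma>m x z \<and> (tstep \<sigma>m ^^ (n - 1)) z y \<and> n \<noteq> 0"
proof -
  assume a: "(tstep \<sigma>m ^^ n) x y" "tval y" "\<not> tval x"
  have "n \<noteq> 0" using a steps_nz[OF a(1)] by blast
  then obtain m where n: "n = Suc m" by (cases n) auto
  from a(1) obtain z where "tstep \<sigma>m x z" "(tstep \<sigma>m ^^ m) z y" unfolding n by (rule relpowp_Suc_E2)
  then show ?thesis using n by auto
qed

lemma beta_step: "tstep \<sigma>m (TApp (TLam x b) X) W \<Longrightarrow> tval X \<and> W = tsubst (TVar(x := X)) b"
  by (erule tstep_TApp_E) (auto dest: tstep_TLam_E simp: tval_def)

lemma tsubst_map_TMeth: "map (tsubst \<sigma>) (map (\<lambda>(m, M). TMeth m s) Ss) = map (\<lambda>(m, M). TMeth m s) Ss"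
  by (induction Ss) auto

lemma subty_struct_beta:
  assumes "subty_tr D (TS s) (TI tI) E1"
  shows "\<exists>Ss body. TypeIface tI Ss \<in> set D \<and> set Ss \<subseteq> methods D (TS s) \<and> E1 = TLam (VAux 0) body \<and>
     tsubst (TVar(VAux 0 := X)) body = TApp (TCon (KI tI)) (tuple (X # map (\<lambda>(m, M). TMeth m s) Ss))"
  using assms
proof (cases rule: subty_tr.cases)
  case (struct_iface Ss)
  have "tsubst (TVar(VAux 0 := X)) (TApp (TCon (KI tI)) (tuple (TVar (VAux 0) # map (\<lambda>(m, M). TMeth m s) Ss)))
      = TApp (TCon (KI tI)) (tuple (X # map (\<lambda>(m, M). TMeth m s) Ss))"
    by (simp only: tsubst.simps tsubst_tuple list.map tsubst_map_TMeth fun_upd_same)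
  then show ?thesis
    apply -
    apply (rule exI[of _ Ss], rule exI[of _ "TApp (TCon (KI tI)) (tuple (TVar (VAux 0) # map (\<lambda>(m, M). TMeth m s) Ss))"])
    using struct_iface by simp
qed

lemma mk_iface:
  assumes dr: "decls_rel D k \<sigma>m" and "TypeIface uI Ss \<in> set D" "set Ss \<subseteq> methods D (TS u)" "j \<le> k"
    "fval v" "W = TApp (TCon (KS u)) (tuple Vs)" "tval W" "\<forall>k1<j. vrel D \<sigma>m k1 (TS u) v W"
  shows "vrel D \<sigma>m j (TI uI) v (TApp (TCon (KI uI)) (tuple (W # map (\<lambda>(m, M). TMeth m u) Ss)))"
proof (rule vrel_iface_intro[where Vs' = "[tuple Vs]"])
  show "W = capp (KS u) [tuple Vs]" using assms(6) by (simp add: capp_single)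
  show "list_all tval (map (\<lambda>(m, M). TMeth m u) Ss)" by (auto simp: list_all_iff tval_def)
  show "\<forall>k2<j. \<forall>i<length Ss. \<exists>d. method_lookup D (fst (Ss ! i)) u d \<and>
          mrel D \<sigma>m k2 (Ss ! i) d (map (\<lambda>(m, M). TMeth m u) Ss ! i)"
  proof (intro allI impI)
    fix k2 i assume k2: "k2 < j" and i: "i < length Ss"
    obtain m M where SM: "Ss ! i = (m, M)" by (metis prod.collapse)
    have "Ss ! i \<in> set Ss" using i by simp
    then have "(m, M) \<in> methods D (TS u)" using assms(3) SM by (metis subsetD)
    then obtain x e where fn: "Func x u m M e \<in> set D" by auto
    have "mrel D \<sigma>m k (m, M) (Func x u m M e) (TMeth m u)" using dr fn unfolding decls_rel_def by blast
    then have "mrel D \<sigma>m k2 (m, M) (Func x u m M e) (TMeth m u)" by (rule mrel_mono) (use k2 assms(4) in simp)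
    moreover have "method_lookup D m u (Func x u m M e)" using fn unfolding method_lookup_def by blast
    moreover have "map (\<lambda>(m, M). TMeth m u) Ss ! i = TMeth m u" using i SM by simp
    ultimately show "\<exists>d. method_lookup D (fst (Ss ! i)) u d \<and>
          mrel D \<sigma>m k2 (Ss ! i) d (map (\<lambda>(m, M). TMeth m u) Ss ! i)" using SM by auto
  qed
qed (use assms in auto)

lemma case_sub_struct:
  assumes dr: "decls_rel D k \<sigma>m" and sub: "subty_tr D (TS s) (TI tI) E1" and IH: "erel D \<sigma>m k (TS s) e E"
  shows "erel D \<sigma>m k (TI tI) e (TApp E1 E)"
proof (rule erel_I)
  fix n1 n v V
  assume a: "n1 + n < k" "(fstep D ^^ n1) e v" "fval v" "(tstep \<sigma>m ^^ n) (TApp E1 E) V" "tval V"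
  obtain Ss body where B: "TypeIface tI Ss \<in> set D" "set Ss \<subseteq> methods D (TS s)" "E1 = TLam (VAux 0) body"
     "tsubst (TVar(VAux 0 := E)) body = TApp (TCon (KI tI)) (tuple (E # map (\<lambda>(m, M). TMeth m s) Ss))"
    using subty_struct_beta[OF sub] by blast
  have nt: "\<not> tval (TApp E1 E)" using B(3) by (simp add: tval_def)
  obtain z where z: "tstep \<sigma>m (TApp E1 E) z" "(tstep \<sigma>m ^^ (n - 1)) z V" "n \<noteq> 0"
    using tsteps_first[OF a(4,5) nt] by blast
  have tE: "tval E" and zeq: "z = TApp (TCon (KI tI)) (tuple (E # map (\<lambda>(m, M). TMeth m s) Ss))"
    using beta_step[OF z(1)[unfolded B(3)]] B(4) by auto
  have tz: "tval z" unfolding zeq tval_TApp_TCon tval_tuple using tE by (auto simp: list_all_iff tval_def)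
  have z2: "n - 1 = 0" "V = z" using tval_steps[OF z(2) tz] by auto
  have R: "vrel D \<sigma>m (k - n1 - 0) (TS s) v E"
    by (rule erel_D[OF IH _ a(2,3) _ tE]) (use a(1) in simp_all)
  obtain fs vs Vs where S: "E = TApp (TCon (KS s)) (tuple Vs)" using vrel_struct_inv[OF R] by blast
  show "vrel D \<sigma>m (k - n1 - n) (TI tI) v V"
    unfolding z2(2) zeq
  proof (rule mk_iface[OF dr B(1) B(2) _ a(3) S tE])
    show "k - n1 - n \<le> k" by simp
    show "\<forall>k1<k - n1 - n. vrel D \<sigma>m k1 (TS s) v E"
      using R vrel_mono z(3) by (metis diff_zero le_diff_iff' less_imp_le_nat diff_le_self le_trans not_le)
  qed
qed


lemma case_tup_two_steps:
  assumes st: "(tstep \<sigma>m ^^ n) (case_tup (TApp (TCon K) (tuple Ys)) K xs b) V" and tV: "tval V"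
    and Ys: "list_all tval Ys" "length xs = length Ys" and xs: "distinct xs" "fv b \<subseteq> set xs" "dbind b"
  shows "2 \<le> n \<and> (tstep \<sigma>m ^^ (n - 2)) (tsubst (upds TVar xs Ys) b) V"
proof -
  define inner where "inner = TCase (TVar (VAux 0)) [((KTup (length xs), xs), b)]"
  have st': "(tstep \<sigma>m ^^ n) (TCase (capp K [tuple Ys]) [((K, [VAux 0]), inner)]) V"
    using st unfolding case_tup_def inner_def capp_single .
  have tv: "list_all tval [tuple Ys]" using Ys by (simp add: tval_tuple)
  have step1: "W = TCase (tuple Ys) [((KTup (length xs), xs), b)]"
    if "tstep \<sigma>m (TCase (capp K [tuple Ys]) [((K, [VAux 0]), inner)]) W" for W
  proof -
    from caseval_step[OF that tv]
    have "W = tsubst (upds TVar [VAux 0] [tuple Ys]) inner" by auto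
    also have "\<dots> = TCase (upds TVar [VAux 0] [tuple Ys] (VAux 0)) [((KTup (length xs), xs), b)]"
      unfolding inner_def by (subst tsubst_case1) (use xs in simp_all)
    also have "upds TVar [VAux 0] [tuple Ys] (VAux 0) = tuple Ys" by (simp add: upds_def)
    finally show ?thesis .
  qed
  have Ytup: "tuple Ys = capp (KTup (length xs)) Ys" using Ys by (simp add: tuple_def)
  have step2: "W = tsubst (upds TVar xs Ys) b"
    if "tstep \<sigma>m (TCase (tuple Ys) [((KTup (length xs), xs), b)]) W" for W
    using caseval_step[OF that[unfolded Ytup] Ys(1)] by auto
  have nt: "\<not> tval (TCase (capp K [tuple Ys]) [((K, [VAux 0]), inner)])" by (simp add: tval_def)
  have T2: "(tstep \<sigma>m ^^ (n - 1)) (TCase (tuple Ys) [((KTup (length xs), xs), b)]) V" and n1: "n \<noteq> 0"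
    using steps_det[OF st' _ step1] steps_nz[OF st'] nt tV by metis+
  have nt2: "\<not> tval (TCase (tuple Ys) [((KTup (length xs), xs), b)])" by (simp add: tval_def)
  have T3: "(tstep \<sigma>m ^^ (n - 1 - 1)) (tsubst (upds TVar xs Ys) b) V" and n2: "n - 1 \<noteq> 0"
    using steps_det[OF T2 _ step2] steps_nz[OF T2] nt2 tV by metis+
  show ?thesis using T3 n1 n2 by (simp add: diff_diff_left numeral_2_eq_2)
qed

lemma iface_body_facts:
  fixes uI :: iname and Ss Rs :: "spec list" and W :: texp and Vms :: "texp list"
  assumes pi: "\<forall>i < length Ss. \<pi> i < length Rs \<and> Ss ! i = Rs ! (\<pi> i)"
  defines "xs \<equiv> map VAux [1..<length Rs + 2]"
    and "b \<equiv> TApp (TCon (KI uI)) (tuple (TVar (VAux 1) # map (\<lambda>i. TVar (VAux (\<pi> i + 2))) [0..<length Ss]))"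
  shows "fv b \<subseteq> set xs \<and> dbind b \<and> distinct xs \<and> length xs = length Rs + 1"
    and "length Vms = length Rs \<Longrightarrow> tsubst (upds TVar xs (W # Vms)) b =
           TApp (TCon (KI uI)) (tuple (W # map (\<lambda>i. Vms ! \<pi> i) [0..<length Ss]))"
proof -
  have dx: "distinct xs" unfolding xs_def by (rule distinct_VAux)
  have lx: "length xs = length Rs + 1" unfolding xs_def by simp
  have nx: "\<And>p. p < length Rs + 1 \<Longrightarrow> xs ! p = VAux (p + 1)" unfolding xs_def by (simp add: nth_upt)
  have "fv b \<subseteq> set xs"
  proof
    fix y assume "y \<in> fv b"
    then have "y = VAux 1 \<or> (\<exists>i < length Ss. y = VAux (\<pi> i + 2))"
      unfolding b_def by (auto simp: fv_tuple)
    then show "y \<in> set xs"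
    proof
      assume "y = VAux 1"
      then show ?thesis using VAux_in_range[of 1 "length Rs + 2"] xs_def by simp
    next
      assume "\<exists>i<length Ss. y = VAux (\<pi> i + 2)"
      then obtain i where i: "i < length Ss" "y = VAux (\<pi> i + 2)" by blast
      then have "\<pi> i < length Rs" using pi by blast
      then show ?thesis using VAux_in_range[of "\<pi> i + 2" "length Rs + 2"] i xs_def by simp
    qed
  qed
  moreover have "dbind b" unfolding b_def by (auto simp: dbind_tuple list_all_iff)
  ultimately show "fv b \<subseteq> set xs \<and> dbind b \<and> distinct xs \<and> length xs = length Rs + 1" using dx lx by simp
  assume lv: "length Vms = length Rs"
  have l2: "length xs = length (W # Vms)" using lx lv by simp
  have u1: "upds TVar xs (W # Vms) (VAux 1) = W"
    using upds_nth[OF dx l2, of 0] nx[of 0] lx by simp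
  have u2: "upds TVar xs (W # Vms) (VAux (\<pi> i + 2)) = Vms ! \<pi> i" if i: "i < length Ss" for i
  proof -
    have p: "\<pi> i < length Rs" using pi i by blast
    have "upds TVar xs (W # Vms) (xs ! (\<pi> i + 1)) = (W # Vms) ! (\<pi> i + 1)"
      by (rule upds_nth[OF dx l2]) (use p lx in simp)
    then show ?thesis using nx[of "\<pi> i + 1"] p by simp
  qed
  show "tsubst (upds TVar xs (W # Vms)) b = TApp (TCon (KI uI)) (tuple (W # map (\<lambda>i. Vms ! \<pi> i) [0..<length Ss]))"
  proof -
    have m: "map (\<lambda>i. upds TVar xs (W # Vms) (VAux (\<pi> i + 2))) [0..<length Ss] = map (\<lambda>i. Vms ! \<pi> i) [0..<length Ss]"
      using u2 by (intro map_cong) auto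
    show ?thesis by (simp only: b_def tsubst.simps tsubst_tuple list.map map_map comp_def m u1)
  qed
qed

lemma case_sub_iface:
  assumes wf: "wf_decls D" and sub: "subty_tr D (TI tI) (TI uI) E1" and IH: "erel D \<sigma>m k (TI tI) e E"
  shows "erel D \<sigma>m k (TI uI) e (TApp E1 E)"
  using sub
proof (cases rule: subty_tr.cases)
  case (iface_iface Rs Ss \<pi>)
  define xs where "xs = map VAux [1..<length Rs + 2]"
  define b where "b = TApp (TCon (KI uI)) (tuple (TVar (VAux 1) # map (\<lambda>i. TVar (VAux (\<pi> i + 2))) [0..<length Ss]))"
  have bf: "fv b \<subseteq> set xs \<and> dbind b \<and> distinct xs \<and> length xs = length Rs + 1"
    using iface_body_facts(1)[OF iface_iface(4)] unfolding xs_def b_def by blast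
  have E1: "E1 = TLam (VAux 0) (case_tup (TVar (VAux 0)) (KI tI) xs b)"
    using iface_iface(1) unfolding xs_def b_def by simp
  show ?thesis
  proof (rule erel_I)
    fix n1 n v V
    assume a: "n1 + n < k" "(fstep D ^^ n1) e v" "fval v" "(tstep \<sigma>m ^^ n) (TApp E1 E) V" "tval V"
    have nt: "\<not> tval (TApp E1 E)" using E1 by (simp add: tval_def)
    obtain z where z: "tstep \<sigma>m (TApp E1 E) z" "(tstep \<sigma>m ^^ (n - 1)) z V" "n \<noteq> 0"
      using tsteps_first[OF a(4,5) nt] by blast
    have tE: "tval E" and zeq: "z = tsubst (TVar(VAux 0 := E)) (case_tup (TVar (VAux 0)) (KI tI) xs b)"
      using beta_step[OF z(1)[unfolded E1]] by auto
    have zeq2: "z = case_tup E (KI tI) xs b"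
      unfolding zeq by (subst tsubst_case_tup) (use bf in simp_all)
    have R: "vrel D \<sigma>m (k - n1 - 0) (TI tI) v E"
      by (rule erel_D[OF IH _ a(2,3) _ tE]) (use a(1) in simp_all)
    obtain Rs' W Vms u Vs' where I: "TypeIface tI Rs' \<in> set D" "length Vms = length Rs'" "fval v" "tval W"
     "W = capp (KS u) Vs'" "list_all tval Vms" "E = TApp (TCon (KI tI)) (tuple (W # Vms))"
     "\<forall>k1<k - n1 - 0. vrel D \<sigma>m k1 (TS u) v W"
     "\<forall>k2<k - n1 - 0. \<forall>i<length Rs'. \<exists>d. method_lookup D (fst (Rs' ! i)) u d \<and> mrel D \<sigma>m k2 (Rs' ! i) d (Vms ! i)"
      using vrel_iface_inv[OF R] by blast
    have Rs': "Rs' = Rs" using uniq_iface[OF wf I(1) iface_iface(2)] .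
    have steps2: "2 \<le> n - 1 \<and> (tstep \<sigma>m ^^ (n - 1 - 2)) (tsubst (upds TVar xs (W # Vms)) b) V"
      by (rule case_tup_two_steps[OF z(2)[unfolded zeq2 I(7)] a(5)]) (use I(4,6,2) Rs' bf in simp_all)
    define Res where "Res = TApp (TCon (KI uI)) (tuple (W # map (\<lambda>i. Vms ! \<pi> i) [0..<length Ss]))"
    have eqR: "tsubst (upds TVar xs (W # Vms)) b = Res"
      unfolding xs_def b_def Res_def by (rule iface_body_facts(2)[OF iface_iface(4)]) (use I(2) Rs' in simp)
    have lt: "list_all tval (map (\<lambda>i. Vms ! \<pi> i) [0..<length Ss])"
      unfolding list_all_iff
    proof
      fix x assume "x \<in> set (map (\<lambda>i. Vms ! \<pi> i) [0..<length Ss])"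
      then obtain i where i: "i < length Ss" "x = Vms ! \<pi> i" by auto
      then have "\<pi> i < length Vms" using iface_iface(4) I(2) Rs' by auto
      then show "tval x" using I(6) i by (simp add: list_all_length)
    qed
    have tRes: "tval Res" unfolding Res_def tval_TApp_TCon tval_tuple
      using I(4) lt by simp
    have st3: "(tstep \<sigma>m ^^ (n - 1 - 2)) Res V" using steps2 eqR by simp
    have fin: "n - 1 - 2 = 0" "V = Res" using tval_steps[OF st3 tRes] by auto
    show "vrel D \<sigma>m (k - n1 - n) (TI uI) v V"
      unfolding fin(2) Res_def
    proof (rule vrel_iface_intro[OF iface_iface(3) _ I(3,4,5)])
      show "length (map (\<lambda>i. Vms ! \<pi> i) [0..<length Ss]) = length Ss" by simp
      show "list_all tval (map (\<lambda>i. Vms ! \<pi> i) [0..<length Ss])" by (rule lt)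
      show "\<forall>k1<k - n1 - n. vrel D \<sigma>m k1 (TS u) v W" using I(8) by simp
      show "\<forall>k2<k - n1 - n. \<forall>i<length Ss. \<exists>d. method_lookup D (fst (Ss ! i)) u d \<and>
              mrel D \<sigma>m k2 (Ss ! i) d (map (\<lambda>i. Vms ! \<pi> i) [0..<length Ss] ! i)"
      proof (intro allI impI)
        fix k2 i assume k2: "k2 < k - n1 - n" and i: "i < length Ss"
        have p: "\<pi> i < length Rs" "Ss ! i = Rs ! \<pi> i" using iface_iface(4) i by auto
        have "\<exists>d. method_lookup D (fst (Rs' ! \<pi> i)) u d \<and> mrel D \<sigma>m k2 (Rs' ! \<pi> i) d (Vms ! \<pi> i)"
          using I(9) k2 p Rs' by simp
        then show "\<exists>d. method_lookup D (fst (Ss ! i)) u d \<and>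
              mrel D \<sigma>m k2 (Ss ! i) d (map (\<lambda>i. Vms ! \<pi> i) [0..<length Ss] ! i)"
          using p Rs' i by simp
      qed
    qed
  qed
qed


lemma clsubst_closed:
  assumes "fv b \<subseteq> set xs" "distinct xs" "dbind b"
  shows "clsubst \<sigma> ((K, xs), b) = ((K, xs), b)"
proof -
  have A: "\<Union> (fv ` \<sigma> ` (fv b - set xs)) = {}" using assms by auto
  have r: "ren {} xs = xs" by (rule ren_id) (use assms in auto)
  have "tsubst (upds \<sigma> xs (map TVar xs)) b = b"
    by (rule tsubst_id[OF assms(3)]) (use assms upds_in_set in blast)
  then show ?thesis unfolding clsubst_eq A r by simp
qed

lemma tsubst_case_closed:
  assumes "\<forall>c \<in> set cls. fv (snd c) \<subseteq> set (snd (fst c)) \<and> distinct (snd (fst c)) \<and> dbind (snd c)"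
  shows "tsubst \<sigma> (TCase e cls) = TCase (tsubst \<sigma> e) cls"
proof -
  have "map (clsubst \<sigma>) cls = cls"
  proof (rule map_idI)
    fix c assume c: "c \<in> set cls"
    obtain K xs b where cc: "c = ((K, xs), b)" by (metis prod.collapse)
    have h: "fv (snd c) \<subseteq> set (snd (fst c)) \<and> distinct (snd (fst c)) \<and> dbind (snd c)" using assms c by blast
    show "clsubst \<sigma> c = c" unfolding cc by (rule clsubst_closed) (use h cc in simp_all)
  qed
  then show ?thesis by (simp add: tsubst_TCase)
qed

lemma destr_shape:
  assumes "destr_tr D tI u E1"
  shows "\<exists>Rs cls. TypeIface tI Rs \<in> set D \<and>
    E1 = TLam (VAux 0) (case_tup (TVar (VAux 0)) (KI tI) (map VAux [1..<length Rs + 2]) (TCase (TVar (VAux 1)) cls)) \<and>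
    (\<forall>c \<in> set cls. fv (snd c) \<subseteq> set (snd (fst c)) \<and> distinct (snd (fst c)) \<and> dbind (snd c)) \<and>
    (\<forall>K xs B. ((K, xs), B) \<in> set cls \<longrightarrow>
       (\<exists>s. K = KS s \<and> xs = [VAux (length Rs + 2)] \<and>
          ((u = TS s \<and> B = TApp (TCon (KS s)) (TVar (VAux (length Rs + 2)))) \<or>
           (\<exists>uI Ej. u = TI uI \<and> subty_tr D (TS s) (TI uI) Ej \<and> B = TApp Ej (TApp (TCon (KS s)) (TVar (VAux (length Rs + 2))))))))"
  using assms
proof (cases rule: destr_tr.cases)
  case (to_struct Rs s)
  define cl0 where "cl0 = ((KS s, [VAux (length Rs + 2)]), TApp (TCon (KS s)) (TVar (VAux (length Rs + 2))))"
  have A: "\<forall>c \<in> set [cl0]. fv (snd c) \<subseteq> set (snd (fst c)) \<and> distinct (snd (fst c)) \<and> dbind (snd c)"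
    unfolding cl0_def by simp
  have B: "\<forall>K xs B. ((K, xs), B) \<in> set [cl0] \<longrightarrow>
       (\<exists>s. K = KS s \<and> xs = [VAux (length Rs + 2)] \<and>
          ((u = TS s \<and> B = TApp (TCon (KS s)) (TVar (VAux (length Rs + 2)))) \<or>
           (\<exists>uI Ej. u = TI uI \<and> subty_tr D (TS s) (TI uI) Ej \<and> B = TApp Ej (TApp (TCon (KS s)) (TVar (VAux (length Rs + 2)))))))"
    unfolding cl0_def using to_struct(1) by simp
  have C: "E1 = TLam (VAux 0) (case_tup (TVar (VAux 0)) (KI tI) (map VAux [1..<length Rs + 2]) (TCase (TVar (VAux 1)) [cl0]))"
    unfolding cl0_def using to_struct(2) by simp
  show ?thesis
    apply (rule exI[of _ Rs], rule exI[of _ "[cl0]"])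
    apply (intro conjI)
    using to_struct apply simp
      apply (rule C)
     apply (rule A)
    by (rule B)
next
  case (to_iface Rs uI cls)
  have cl: "\<exists>s Ej. subty_tr D (TS s) (TI uI) Ej \<and> c = ((KS s, [VAux (length Rs + 2)]),
                          TApp Ej (TApp (TCon (KS s)) (TVar (VAux (length Rs + 2)))))" if c: "c \<in> set cls" for c
  proof -
    from c obtain i where i: "i < length cls" "c = cls ! i" by (metis in_set_conv_nth)
    have "length (structs_sub D uI) = length cls" using to_iface(4) list_all2_lengthD by blast
    then have i2: "i < length (structs_sub D uI)" using i by simp
    from list_all2_nthD[OF to_iface(4) i2] i show ?thesis by blast
  qed
  have c1: "\<forall>c \<in> set cls. fv (snd c) \<subseteq> set (snd (fst c)) \<and> distinct (snd (fst c)) \<and> dbind (snd c)"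
  proof
    fix c assume c: "c \<in> set cls"
    from cl[OF c] obtain s Ej where "subty_tr D (TS s) (TI uI) Ej" "c = ((KS s, [VAux (length Rs + 2)]),
                          TApp Ej (TApp (TCon (KS s)) (TVar (VAux (length Rs + 2)))))" by blast
    moreover have "fv Ej = {} \<and> dbind Ej" using subty_closed calculation(1) by blast
    ultimately show "fv (snd c) \<subseteq> set (snd (fst c)) \<and> distinct (snd (fst c)) \<and> dbind (snd c)"
      by simp
  qed
  have c2: "\<forall>K xs B. ((K, xs), B) \<in> set cls \<longrightarrow>
       (\<exists>s. K = KS s \<and> xs = [VAux (length Rs + 2)] \<and>
          ((u = TS s \<and> B = TApp (TCon (KS s)) (TVar (VAux (length Rs + 2)))) \<or>
           (\<exists>uI Ej. u = TI uI \<and> subty_tr D (TS s) (TI uI) Ej \<and> B = TApp Ej (TApp (TCon (KS s)) (TVar (VAux (length Rs + 2)))))))"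
  proof (intro allI impI)
    fix K xs B assume c: "((K, xs), B) \<in> set cls"
    from cl[OF c] obtain s Ej where H: "subty_tr D (TS s) (TI uI) Ej" "((K, xs), B) = ((KS s, [VAux (length Rs + 2)]),
                          TApp Ej (TApp (TCon (KS s)) (TVar (VAux (length Rs + 2)))))" by blast
    then have "K = KS s" "xs = [VAux (length Rs + 2)]" "B = TApp Ej (TApp (TCon (KS s)) (TVar (VAux (length Rs + 2))))" by simp_all
    then show "\<exists>s. K = KS s \<and> xs = [VAux (length Rs + 2)] \<and>
          ((u = TS s \<and> B = TApp (TCon (KS s)) (TVar (VAux (length Rs + 2)))) \<or>
           (\<exists>uI Ej. u = TI uI \<and> subty_tr D (TS s) (TI uI) Ej \<and> B = TApp Ej (TApp (TCon (KS s)) (TVar (VAux (length Rs + 2))))))"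
      using H(1) to_iface(1) by blast
  qed
  show ?thesis
    apply (rule exI[of _ Rs], rule exI[of _ cls])
    apply (intro conjI)
       apply (rule to_iface(3))
      apply (rule to_iface(2))
     apply (rule c1)
    by (rule c2)
qed


lemma case_assert:
  assumes wf: "wf_decls D" and dr: "decls_rel D k \<sigma>m" and de: "destr_tr D tI u E1"
    and IH: "erel D \<sigma>m k (TI tI) e E"
  shows "erel D \<sigma>m k u (Assert e u) (TApp E1 E)"
proof -
  obtain Rs cls where Sh: "TypeIface tI Rs \<in> set D"
    "E1 = TLam (VAux 0) (case_tup (TVar (VAux 0)) (KI tI) (map VAux [1..<length Rs + 2]) (TCase (TVar (VAux 1)) cls))"
    "\<forall>c \<in> set cls. fv (snd c) \<subseteq> set (snd (fst c)) \<and> distinct (snd (fst c)) \<and> dbind (snd c)"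
    "\<forall>K xs B. ((K, xs), B) \<in> set cls \<longrightarrow>
       (\<exists>s. K = KS s \<and> xs = [VAux (length Rs + 2)] \<and>
          ((u = TS s \<and> B = TApp (TCon (KS s)) (TVar (VAux (length Rs + 2)))) \<or>
           (\<exists>uI Ej. u = TI uI \<and> subty_tr D (TS s) (TI uI) Ej \<and> B = TApp Ej (TApp (TCon (KS s)) (TVar (VAux (length Rs + 2)))))))"
    using destr_shape[OF de] by blast
  define xs where "xs = map VAux [1..<length Rs + 2]"
  define b where "b = TCase (TVar (VAux 1)) cls"
  have dx: "distinct xs" unfolding xs_def by (rule distinct_VAux)
  have lx: "length xs = length Rs + 1" unfolding xs_def by simp
  have x0: "xs ! 0 = VAux 1" unfolding xs_def by (simp add: nth_upt)
  have fvb: "fv b \<subseteq> set xs"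
  proof -
    have "\<Union> ((\<lambda>c. fv (snd c) - set (snd (fst c))) ` set cls) = {}" using Sh(3) by blast
    then have "fv b = {VAux 1}" unfolding b_def fv.simps set_map by auto
    moreover have "VAux 1 \<in> set xs" using VAux_in_range[of 1 "length Rs + 2"] xs_def by simp
    ultimately show ?thesis by simp
  qed
  have db: "dbind b" unfolding b_def using Sh(3) by simp
  show ?thesis
  proof (rule erel_I)
    fix n1 n v V
    assume a: "n1 + n < k" "(fstep D ^^ n1) (Assert e u) v" "fval v" "(tstep \<sigma>m ^^ n) (TApp E1 E) V" "tval V"
    obtain a1 v0 where F1: "a1 \<le> n1" "fval v0" "(fstep D ^^ a1) e v0" "(fstep D ^^ (n1 - a1)) (Assert v0 u) v"
      using assert_recv_steps[OF a(2,3)] by blast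
    obtain s0 vs0 where F2: "n1 - a1 = 1" "v0 = SLit s0 vs0" "v = v0"
      using assertval_steps[OF F1(4) a(3) F1(2)] by blast
    have nt: "\<not> tval (TApp E1 E)" using Sh(2) by (simp add: tval_def)
    obtain z where z: "tstep \<sigma>m (TApp E1 E) z" "(tstep \<sigma>m ^^ (n - 1)) z V" "n \<noteq> 0"
      using tsteps_first[OF a(4,5) nt] by blast
    have tE: "tval E" and zeq: "z = tsubst (TVar(VAux 0 := E)) (case_tup (TVar (VAux 0)) (KI tI) xs b)"
      using beta_step[OF z(1)[unfolded Sh(2)]] unfolding xs_def b_def by auto
    have zeq2: "z = case_tup E (KI tI) xs b"
      unfolding zeq by (subst tsubst_case_tup) (use dx fvb db in simp_all)
    have R: "vrel D \<sigma>m (k - a1 - 0) (TI tI) v0 E"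
      by (rule erel_D[OF IH _ F1(3) F1(2) _ tE]) (use a(1) F1(1) in simp_all)
    obtain Rs' W Vms u0 Vs' where I: "TypeIface tI Rs' \<in> set D" "length Vms = length Rs'" "fval v0" "tval W"
     "W = capp (KS u0) Vs'" "list_all tval Vms" "E = TApp (TCon (KI tI)) (tuple (W # Vms))"
     "\<forall>k1<k - a1 - 0. vrel D \<sigma>m k1 (TS u0) v0 W"
      using vrel_iface_inv[OF R] by blast
    have Rs': "Rs' = Rs" using uniq_iface[OF wf I(1) Sh(1)] .
    have ka: "0 < k - a1 - 0" using a(1) F1(1) F2(1) by simp
    obtain fs1 vs1 Vs0 where W0: "W = TApp (TCon (KS u0)) (tuple Vs0)"
      using vrel_struct_inv[OF I(8)[rule_format, OF ka]] by blast
    have tT: "tval (tuple Vs0)" using I(4) unfolding W0 tval_TApp_TCon .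
    then have tVs0: "list_all tval Vs0" unfolding tval_tuple .
    have steps2: "2 \<le> n - 1 \<and> (tstep \<sigma>m ^^ (n - 1 - 2)) (tsubst (upds TVar xs (W # Vms)) b) V"
      by (rule case_tup_two_steps[OF z(2)[unfolded zeq2 I(7)] a(5)]) (use I(4,6,2) Rs' dx fvb db lx in simp_all)
    have l2: "length xs = length (W # Vms)" using lx I(2) Rs' by simp
    have "tsubst (upds TVar xs (W # Vms)) b = TCase (upds TVar xs (W # Vms) (VAux 1)) cls"
      unfolding b_def by (subst tsubst_case_closed[OF Sh(3)]) simp
    also have "upds TVar xs (W # Vms) (VAux 1) = W" using upds_nth[OF dx l2, of 0] x0 lx by simp
    finally have st3: "(tstep \<sigma>m ^^ (n - 1 - 2)) (TCase W cls) V" using steps2 by simp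
    have nt3: "\<not> tval (TCase W cls)" by (simp add: tval_def)
    obtain z4 where z4: "tstep \<sigma>m (TCase W cls) z4" "(tstep \<sigma>m ^^ (n - 1 - 2 - 1)) z4 V" "n - 1 - 2 \<noteq> 0"
      using tsteps_first[OF st3 a(5) nt3] by blast
    have tY: "list_all tval [tuple Vs0]" using tT by simp
    have z4': "tstep \<sigma>m (TCase (capp (KS u0) [tuple Vs0]) cls) z4" using z4(1) unfolding W0 capp_single by assumption
    obtain xs4 B where C: "((KS u0, xs4), B) \<in> set cls" "length xs4 = length [tuple Vs0]" "z4 = tsubst (upds TVar xs4 [tuple Vs0]) B"
      using caseval_step[OF z4' tY] by blast
    obtain s where C2: "KS u0 = KS s" "xs4 = [VAux (length Rs + 2)]"
          "(u = TS s \<and> B = TApp (TCon (KS s)) (TVar (VAux (length Rs + 2)))) \<or>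
           (\<exists>uI Ej. u = TI uI \<and> subty_tr D (TS s) (TI uI) Ej \<and> B = TApp Ej (TApp (TCon (KS s)) (TVar (VAux (length Rs + 2)))))"
      using Sh(4)[rule_format, OF C(1)] by (elim exE conjE) (rule that)
    have su: "s = u0" using C2(1) by simp
    have upd4: "upds TVar xs4 [tuple Vs0] (VAux (length Rs + 2)) = tuple Vs0" using C2(2) by (simp add: upds_def)
    have idx: "k - n1 - n < k - a1 - 0" using a(1) F1(1) F2(1) z(3) by simp
    from C2(3) show "vrel D \<sigma>m (k - n1 - n) u v V"
    proof
      assume H: "u = TS s \<and> B = TApp (TCon (KS s)) (TVar (VAux (length Rs + 2)))"
      have "z4 = W" using C(3) H upd4 W0 su by simp
      then have "V = W" using tval_steps[OF z4(2)] I(4) by simp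
      then show ?thesis using I(8) idx H su F2(3) by simp
    next
      assume "\<exists>uI Ej. u = TI uI \<and> subty_tr D (TS s) (TI uI) Ej \<and> B = TApp Ej (TApp (TCon (KS s)) (TVar (VAux (length Rs + 2))))"
      then obtain uI Ej where H: "u = TI uI" "subty_tr D (TS s) (TI uI) Ej" "B = TApp Ej (TApp (TCon (KS s)) (TVar (VAux (length Rs + 2))))"
        by blast
      have cE: "fv Ej = {} \<and> dbind Ej" using subty_closed[OF H(2)] .
      have "z4 = TApp Ej W" using C(3) H(3) upd4 W0 su tsubst_closed cE by simp
      then have st5: "(tstep \<sigma>m ^^ (n - 1 - 2 - 1)) (TApp Ej W) V" using z4(2) by simp
      obtain Ss body where B5: "TypeIface uI Ss \<in> set D" "set Ss \<subseteq> methods D (TS s)" "Ej = TLam (VAux 0) body"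
        "tsubst (TVar(VAux 0 := W)) body = TApp (TCon (KI uI)) (tuple (W # map (\<lambda>(m, M). TMeth m s) Ss))"
        using subty_struct_beta[OF H(2)] by blast
      have nt5: "\<not> tval (TApp Ej W)" using B5(3) by (simp add: tval_def)
      obtain z5 where z5: "tstep \<sigma>m (TApp Ej W) z5" "(tstep \<sigma>m ^^ (n - 1 - 2 - 1 - 1)) z5 V"
        using tsteps_first[OF st5 a(5) nt5] by blast
      have z5eq: "z5 = TApp (TCon (KI uI)) (tuple (W # map (\<lambda>(m, M). TMeth m s) Ss))"
        using beta_step[OF z5(1)[unfolded B5(3)]] B5(4) by auto
      have tz5: "tval z5" unfolding z5eq tval_TApp_TCon tval_tuple using I(4) by (auto simp: list_all_iff tval_def)
      have V5: "V = z5" using tval_steps[OF z5(2) tz5] by simp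
      show ?thesis unfolding V5 z5eq H(1) F2(3)
      proof (rule mk_iface[OF dr B5(1) B5(2) _ I(3) W0[unfolded su[symmetric]] I(4)])
        show "k - n1 - n \<le> k" by simp
        show "\<forall>k1<k - n1 - n. vrel D \<sigma>m k1 (TS s) v0 W" using I(8) idx su by simp
      qed
    qed
  qed
qed




lemma set_VAux_range: "set (map VAux [a..<b]) = VAux ` {a..<b}" by simp

lemma tsubst_call_iface:
  assumes FE: "\<forall>Ei \<in> set Es. fv Ei \<subseteq> range VX" and j: "j < n"
  defines "xs \<equiv> map VAux [1..<n + 2]" and "F \<equiv> \<Union> (fv ` set Es)"
  shows "\<exists>z0 xs'. tsubst \<sigma> (case_tup E K xs (TApp (TApp (TVar (VAux (j + 2))) (TVar (VAux 1))) (tuple Es))) =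
     TCase (tsubst \<sigma> E) [((K, [z0]), TCase (TVar z0) [((KTup (n + 1), xs'),
        TApp (TApp (TVar (xs' ! (j + 1))) (TVar (xs' ! 0))) (tuple (map (tsubst \<sigma>) Es)))])] \<and>
     length xs' = n + 1 \<and> distinct xs' \<and> z0 \<notin> \<Union> (fv ` \<sigma> ` F) \<and> set xs' \<inter> \<Union> (fv ` \<sigma> ` F) = {}"
proof -
  define A where "A = \<Union> (fv ` \<sigma> ` F)"
  define B where "B = TApp (TApp (TVar (VAux (j + 2))) (TVar (VAux 1))) (tuple Es)"
  have fA: "finite A" unfolding A_def F_def by (simp add: finite_fv)
  have dx: "distinct xs" unfolding xs_def by (rule distinct_VAux)
  have lx: "length xs = n + 1" unfolding xs_def by simp
  have nx: "\<And>p. p < n + 1 \<Longrightarrow> xs ! p = VAux (p + 1)" unfolding xs_def by (simp add: nth_upt)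
  have sx: "set xs = VAux ` {1..<n + 2}" unfolding xs_def by simp
  have FVX: "F \<subseteq> range VX" using FE unfolding F_def by blast
  have Fx: "F \<inter> set xs = {}" using FVX sx by auto
  have F0: "VAux 0 \<notin> F" using FVX by auto
  have j2: "VAux (j + 2) \<in> set xs" "VAux 1 \<in> set xs" using sx j by auto
  have fvB: "fv B = {VAux (j + 2), VAux 1} \<union> F" unfolding B_def F_def by (auto simp: fv_tuple)
  have fvBx: "fv B - set xs = F" using fvB Fx j2 by auto
  define inner where "inner = TCase (TVar (VAux 0)) [((KTup (length xs), xs), B)]"
  have fvin: "fv inner - set [VAux 0] = F" unfolding inner_def using fvBx F0 by auto
  have ct: "case_tup E K xs B = TCase E [((K, [VAux 0]), inner)]" unfolding case_tup_def inner_def ..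
  have A0: "\<Union> (fv ` \<sigma> ` (fv inner - set [VAux 0])) = A" unfolding fvin A_def ..
  obtain z0 where z0: "ren A [VAux 0] = [z0]" "z0 \<notin> A"
  proof -
    have "length (ren A [VAux 0]) = 1 \<and> set (ren A [VAux 0]) \<inter> A = {}" using ren_props[OF fA, of "[VAux 0]"] by (simp del: ren.simps)
    then show ?thesis using that by (cases "ren A [VAux 0]") (auto simp del: ren.simps)
  qed
  define \<sigma>1 where "\<sigma>1 = \<sigma>(VAux 0 := TVar z0)"
  have s1: "upds \<sigma> [VAux 0] [TVar z0] = \<sigma>1" unfolding \<sigma>1_def by (simp add: upds_def)
  have A1: "\<Union> (fv ` \<sigma>1 ` (fv B - set xs)) = A"
  proof -
    have "\<sigma>1 ` F = \<sigma> ` F" unfolding \<sigma>1_def using F0 by (auto simp: image_def)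
    then show ?thesis unfolding fvBx A_def by simp
  qed
  define xs' where "xs' = ren A xs"
  have xs': "length xs' = n + 1" "distinct xs'" "set xs' \<inter> A = {}"
    using ren_props[OF fA, of xs] lx unfolding xs'_def by auto
  define \<sigma>2 where "\<sigma>2 = upds \<sigma>1 xs (map TVar xs')"
  have l2: "length xs = length (map TVar xs')" using lx xs' by simp
  have s2a: "\<sigma>2 (VAux (j + 2)) = TVar (xs' ! (j + 1))"
    using upds_nth[OF dx l2, of "j + 1"] nx[of "j + 1"] j lx xs'(1) unfolding \<sigma>2_def by simp
  have s2b: "\<sigma>2 (VAux 1) = TVar (xs' ! 0)"
    using upds_nth[OF dx l2, of 0] nx[of 0] lx xs'(1) unfolding \<sigma>2_def by simp
  have s2c: "tsubst \<sigma>2 Ei = tsubst \<sigma> Ei" if Ei: "Ei \<in> set Es" for Ei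
  proof (rule tsubst_cong)
    fix y assume y: "y \<in> fv Ei"
    then have yF: "y \<in> F" unfolding F_def using Ei by blast
    then have "y \<notin> set xs" using Fx by blast
    then have "\<sigma>2 y = \<sigma>1 y" unfolding \<sigma>2_def by (rule upds_notin)
    also have "\<dots> = \<sigma> y" unfolding \<sigma>1_def using yF F0 by auto
    finally show "\<sigma>2 y = \<sigma> y" .
  qed
  have tB: "tsubst \<sigma>2 B = TApp (TApp (TVar (xs' ! (j + 1))) (TVar (xs' ! 0))) (tuple (map (tsubst \<sigma>) Es))"
  proof -
    have "map (tsubst \<sigma>2) Es = map (tsubst \<sigma>) Es" using s2c by (rule map_cong[OF refl])
    then show ?thesis by (simp only: B_def tsubst.simps tsubst_tuple s2a s2b)
  qed
  have tin: "tsubst \<sigma>1 inner = TCase (TVar z0) [((KTup (n + 1), xs'), TApp (TApp (TVar (xs' ! (j + 1))) (TVar (xs' ! 0))) (tuple (map (tsubst \<sigma>) Es)))]"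
    unfolding inner_def tsubst_TCase list.map clsubst_eq A1 xs'_def[symmetric] \<sigma>2_def[symmetric] tB
    using \<sigma>1_def lx by simp
  have "tsubst \<sigma> (case_tup E K xs B) = TCase (tsubst \<sigma> E) [((K, [z0]), tsubst \<sigma>1 inner)]"
    unfolding ct tsubst_TCase list.map clsubst_eq A0 z0(1) list.map s1 ..
  then show ?thesis unfolding B_def[symmetric] tin A_def[symmetric] using xs' z0(2) by blast
qed


lemma cval_dbind: "cval V \<Longrightarrow> dbind V"
  by (induction V rule: cval.induct) (auto simp: tval_def elim: is_tvar.elims)

lemma tval_dbind: "tval V \<Longrightarrow> dbind V"
  unfolding tval_def using cval_dbind by (auto elim: is_tvar.elims)

lemma call_iface_steps:
  assumes st: "(tstep \<sigma>m ^^ m) (TCase (TApp (TCon (KI tI)) (tuple (W # Vms)))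
        [((KI tI, [z0]), TCase (TVar z0) [((KTup (n + 1), xs'), TApp (TApp (TVar (xs' ! (j + 1))) (TVar (xs' ! 0))) (tuple SEs))])]) V"
    and tV: "tval V" and tv: "tval W" "list_all tval Vms" "length Vms = n" and j: "j < n"
    and xs': "length xs' = n + 1" "distinct xs'" "z0 \<notin> A" "set xs' \<inter> A = {}"
    and SE: "\<forall>S \<in> set SEs. fv S \<subseteq> A \<and> dbind S"
  shows "2 \<le> m \<and> (tstep \<sigma>m ^^ (m - 2)) (TApp (TApp (Vms ! j) W) (tuple SEs)) V"
proof -
  define Bd where "Bd = TApp (TApp (TVar (xs' ! (j + 1))) (TVar (xs' ! 0))) (tuple SEs)"
  define Y where "Y = tuple (W # Vms)"
  have tY: "list_all tval [Y]" unfolding Y_def using tv by (simp add: tval_tuple)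
  have tWV: "list_all tval (W # Vms)" using tv by simp
  have fvSE: "fv (tuple SEs) \<subseteq> A" using SE by (auto simp: fv_tuple)
  have dSE: "dbind (tuple SEs)" using SE by (auto simp: dbind_tuple list_all_iff)
  have x01: "xs' ! (j + 1) \<in> set xs'" "xs' ! 0 \<in> set xs'" using xs'(1) j by auto
  have fvBd: "fv Bd \<subseteq> set xs' \<union> A" unfolding Bd_def using fvSE x01 by auto
  have dBd: "dbind Bd" unfolding Bd_def using dSE by simp
  define \<sigma>1 where "\<sigma>1 = upds TVar [z0] [Y]"
  have s1: "\<sigma>1 y = TVar y" if "y \<in> fv Bd - set xs'" for y
  proof -
    have "y \<noteq> z0" using that fvBd xs'(3) by blast
    then show ?thesis unfolding \<sigma>1_def by (simp add: upds_def)
  qed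
  have A2: "\<Union> (fv ` \<sigma>1 ` (fv Bd - set xs')) = fv Bd - set xs'"
  proof -
    have "\<sigma>1 ` (fv Bd - set xs') = TVar ` (fv Bd - set xs')" using s1 by (auto simp: image_def)
    then show ?thesis by auto
  qed
  have r2: "ren (fv Bd - set xs') xs' = xs'" by (rule ren_id[OF xs'(2)]) auto
  have b2: "tsubst (upds \<sigma>1 xs' (map TVar xs')) Bd = Bd"
  proof (rule tsubst_id[OF dBd])
    fix y assume y: "y \<in> fv Bd"
    show "upds \<sigma>1 xs' (map TVar xs') y = TVar y"
    proof (cases "y \<in> set xs'")
      case True then show ?thesis using upds_in_set[OF xs'(2)] by blast
    next
      case False
      have "upds \<sigma>1 xs' (map TVar xs') y = \<sigma>1 y" by (rule upds_notin[OF False])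
      also have "\<dots> = TVar y" using s1 y False by blast
      finally show ?thesis .
    qed
  qed
  have step1: "z = TCase Y [((KTup (n + 1), xs'), Bd)]"
    if "tstep \<sigma>m (TCase (TApp (TCon (KI tI)) Y) [((KI tI, [z0]), TCase (TVar z0) [((KTup (n + 1), xs'), Bd)])]) z" for z
  proof -
    have "tstep \<sigma>m (TCase (capp (KI tI) [Y]) [((KI tI, [z0]), TCase (TVar z0) [((KTup (n + 1), xs'), Bd)])]) z"
      using that unfolding capp_single .
    from caseval_step[OF this tY]
    have "z = tsubst \<sigma>1 (TCase (TVar z0) [((KTup (n + 1), xs'), Bd)])" unfolding \<sigma>1_def by auto
    also have "\<dots> = TCase (\<sigma>1 z0) [((KTup (n + 1), xs'), Bd)]"
      unfolding tsubst_TCase list.map clsubst_eq A2 r2 b2 by simp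
    also have "\<sigma>1 z0 = Y" unfolding \<sigma>1_def by (simp add: upds_def)
    finally show ?thesis .
  qed
  have lY: "length xs' = length (W # Vms)" using xs'(1) tv(3) by simp
  have step2: "z = TApp (TApp (Vms ! j) W) (tuple SEs)"
    if "tstep \<sigma>m (TCase Y [((KTup (n + 1), xs'), Bd)]) z" for z
  proof -
    have "Y = capp (KTup (n + 1)) (W # Vms)" unfolding Y_def tuple_def using tv(3) by simp
    from caseval_step[OF that[unfolded this] tWV]
    have z: "z = tsubst (upds TVar xs' (W # Vms)) Bd" by auto
    have u1: "upds TVar xs' (W # Vms) (xs' ! (j + 1)) = Vms ! j"
      using upds_nth[OF xs'(2) lY, of "j + 1"] j xs'(1) by simp
    have u0: "upds TVar xs' (W # Vms) (xs' ! 0) = W"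
      using upds_nth[OF xs'(2) lY, of 0] xs'(1) by simp
    have uS: "map (tsubst (upds TVar xs' (W # Vms))) SEs = SEs"
    proof (rule map_idI)
      fix S assume S: "S \<in> set SEs"
      show "tsubst (upds TVar xs' (W # Vms)) S = S"
      proof (rule tsubst_id)
        show "dbind S" using SE S by blast
        fix y assume "y \<in> fv S"
        then have "y \<notin> set xs'" using SE S xs'(4) by blast
        then show "upds TVar xs' (W # Vms) y = TVar y" by (rule upds_notin)
      qed
    qed
    show ?thesis unfolding z Bd_def tsubst.simps tsubst_tuple u1 u0 uS ..
  qed
  have st1: "(tstep \<sigma>m ^^ m) (TCase (TApp (TCon (KI tI)) Y) [((KI tI, [z0]), TCase (TVar z0) [((KTup (n + 1), xs'), Bd)])]) V"
    using st unfolding Y_def Bd_def .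
  have nt1: "\<not> tval (TCase (TApp (TCon (KI tI)) Y) [((KI tI, [z0]), TCase (TVar z0) [((KTup (n + 1), xs'), Bd)])])"
    by (simp add: tval_def)
  have T2: "(tstep \<sigma>m ^^ (m - 1)) (TCase Y [((KTup (n + 1), xs'), Bd)]) V" and n1: "m \<noteq> 0"
    using steps_det[OF st1 _ step1] steps_nz[OF st1] nt1 tV by metis+
  have nt2: "\<not> tval (TCase Y [((KTup (n + 1), xs'), Bd)])" by (simp add: tval_def)
  have T3: "(tstep \<sigma>m ^^ (m - 1 - 1)) (TApp (TApp (Vms ! j) W) (tuple SEs)) V" and n2: "m - 1 \<noteq> 0"
    using steps_det[OF T2 _ step2] steps_nz[OF T2] nt2 tV by metis+
  show ?thesis using T3 n1 n2 by (simp add: diff_diff_left numeral_2_eq_2)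
qed


lemma case_call_iface:
  assumes wf: "wf_decls D" and ms: "method_subst \<sigma>m"
    and IH: "erel D \<sigma>m k (TI tI) e E" and Sd: "TypeIface tI Ss \<in> set D" "j < length Ss" "Ss ! j = (m, (ps, t))"
    and len: "length es = length ps" "length SEs = length ps"
    and IHs: "\<forall>i<length ps. erel D \<sigma>m k (snd (ps ! i)) (es ! i) (SEs ! i)"
    and xs': "length xs' = length Ss + 1" "distinct xs'" "z0 \<notin> A" "set xs' \<inter> A = {}"
    and SE: "\<forall>S \<in> set SEs. fv S \<subseteq> A \<and> dbind S"
  shows "erel D \<sigma>m k t (Call e m es) (TCase E [((KI tI, [z0]), TCase (TVar z0) [((KTup (length Ss + 1), xs'),
           TApp (TApp (TVar (xs' ! (j + 1))) (TVar (xs' ! 0))) (tuple SEs))])])"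
proof (rule erel_I)
  fix n1 n v V
  assume a: "n1 + n < k" "(fstep D ^^ n1) (Call e m es) v" "fval v"
    "(tstep \<sigma>m ^^ n) (TCase E [((KI tI, [z0]), TCase (TVar z0) [((KTup (length Ss + 1), xs'),
           TApp (TApp (TVar (xs' ! (j + 1))) (TVar (xs' ! 0))) (tuple SEs))])]) V" "tval V"
  obtain a1 v0 where F1: "a1 \<le> n1" "fval v0" "(fstep D ^^ a1) e v0" "(fstep D ^^ (n1 - a1)) (Call v0 m es) v"
    using call_recv_steps[OF a(2,3)] by blast
  obtain vs ns1 where F2: "length vs = length es" "length ns1 = length es" "list_all fval vs"
       "\<forall>i < length es. (fstep D ^^ (ns1 ! i)) (es ! i) (vs ! i)" "sum_list ns1 \<le> n1 - a1"
       "(fstep D ^^ (n1 - a1 - sum_list ns1)) (Call v0 m vs) v"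
    using call_args_steps[OF F1(4) a(3) F1(2)] by blast
  obtain c1 s' vs0 x' ps' t' b' where F3: "n1 - a1 - sum_list ns1 = Suc c1" "v0 = SLit s' vs0"
      "Func x' s' m (ps', t') b' \<in> set D" "length vs = length ps'"
      "(fstep D ^^ c1) (fsubst (upds (Var(x' := SLit s' vs0)) (map fst ps') vs) b') v"
    using callval_steps[OF F2(6) a(3) F1(2) F2(3)] by blast
  obtain a2 V0 where T1: "a2 < n" "tval V0" "(tstep \<sigma>m ^^ a2) E V0"
    "(tstep \<sigma>m ^^ (n - a2)) (TCase V0 [((KI tI, [z0]), TCase (TVar z0) [((KTup (length Ss + 1), xs'),
           TApp (TApp (TVar (xs' ! (j + 1))) (TVar (xs' ! 0))) (tuple SEs))])]) V"
    using case_steps[OF a(4,5)] by blast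
  have R0: "vrel D \<sigma>m (k - a1 - a2) (TI tI) v0 V0"
    by (rule erel_D[OF IH _ F1(3) F1(2) T1(3) T1(2)]) (use a(1) F1(1) F2(5) T1(1) in simp)
  obtain Ss' W Vms u Vs' where I: "TypeIface tI Ss' \<in> set D" "length Vms = length Ss'" "fval v0" "tval W"
     "W = capp (KS u) Vs'" "list_all tval Vms" "V0 = TApp (TCon (KI tI)) (tuple (W # Vms))"
     "\<forall>k1<k - a1 - a2. vrel D \<sigma>m k1 (TS u) v0 W"
     "\<forall>k2<k - a1 - a2. \<forall>i<length Ss'. \<exists>d. method_lookup D (fst (Ss' ! i)) u d \<and> mrel D \<sigma>m k2 (Ss' ! i) d (Vms ! i)"
    using vrel_iface_inv[OF R0] by blast
  have Ss': "Ss' = Ss" using uniq_iface[OF wf I(1) Sd(1)] .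
  have T2: "2 \<le> n - a2 \<and> (tstep \<sigma>m ^^ (n - a2 - 2)) (TApp (TApp (Vms ! j) W) (tuple SEs)) V"
    by (rule call_iface_steps[OF T1(4)[unfolded I(7)] a(5) I(4) I(6) _ Sd(2) xs' SE]) (use I(2) Ss' in simp)
  obtain b Vx where T3: "b \<le> n - a2 - 2" "tval Vx" "(tstep \<sigma>m ^^ b) (tuple SEs) Vx"
      "(tstep \<sigma>m ^^ (n - a2 - 2 - b)) (TApp (TApp (Vms ! j) W) Vx) V"
    using app_outer_steps[OF conjunct2[OF T2] a(5)] by blast
  obtain Vs ns2 where T4: "length Vs = length SEs" "length ns2 = length SEs" "list_all tval Vs"
       "\<forall>i < length SEs. (tstep \<sigma>m ^^ (ns2 ! i)) (SEs ! i) (Vs ! i)" "sum_list ns2 = b" "Vx = tuple Vs"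
    using tuple_steps[OF T3(3) T3(2)] by blast
  define jj where "jj = k - (a1 + sum_list ns1) - (a2 + 2 + b)"
  have ka: "0 < k - a1 - a2" using a(1) F1(1) F2(5) F3(1) T1(1) T2 by simp
  have jjlt: "jj < k - a1 - a2" unfolding jj_def using ka by simp
  obtain fs0 vs0' Vs0 where S: "v0 = SLit u vs0'"
    using vrel_struct_inv[OF I(8)[rule_format, OF ka]] by blast
  have s': "s' = u" using S F3(2) by simp
  obtain d where md: "method_lookup D (fst (Ss ! j)) u d" "mrel D \<sigma>m jj (Ss ! j) d (Vms ! j)"
    using I(9) jjlt Sd(2) Ss' by blast
  obtain xd Md ed where dd: "d = Func xd u m Md ed" "d \<in> set D" using md(1) Sd(3) unfolding method_lookup_def by auto
  have Md: "Md = (ps, t)" using md(2) dd(1) Sd(3) unfolding mrel_def by simp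
  have same: "x' = xd \<and> (ps', t') = (ps, t) \<and> b' = ed"
    using uniq_func[OF wf F3(3)[unfolded s'], of xd Md ed] dd Md by auto
  have R0': "vrel D \<sigma>m jj (TS u) v0 W" using I(8) jjlt by blast
  have Rargs: "\<forall>i < length ps. vrel D \<sigma>m (k - sum_list ns1 - sum_list ns2) (snd (ps ! i)) (vs ! i) (Vs ! i)"
    by (rule args_rel[OF IHs len, of vs ns1 Vs ns2 "a1 + a2 + 2"])
       (use F2 T4 len a(1) F1(1) T1(1) T2 T3(1) F3(1) in auto)
  have Rargs': "\<forall>i < length ps. vrel D \<sigma>m jj (snd (ps ! i)) (vs ! i) (Vs ! i)"
  proof (intro allI impI)
    fix i assume i: "i < length ps"
    show "vrel D \<sigma>m jj (snd (ps ! i)) (vs ! i) (Vs ! i)"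
      by (rule vrel_mono[OF Rargs[rule_format, OF i]]) (use T4(5) in \<open>simp add: jj_def\<close>)
  qed
  have mr: "mrel D \<sigma>m jj (m, (ps, t)) (Func xd u m (ps, t) ed) (Vms ! j)" using md(2) dd(1) Md Sd(3) by simp
  have E: "erel D \<sigma>m jj t (fsubst (upds (Var(xd := v0)) (map fst ps) vs) ed) (TApp (TApp (Vms ! j) W) (tuple Vs))"
    by (rule mrel_use[OF mr R0']) (use F2(1) len T4(1) Rargs' in simp_all)
  have body_steps: "(fstep D ^^ c1) (fsubst (upds (Var(xd := v0)) (map fst ps) vs) ed) v"
    using F3(5) same F3(2) s' by simp
  have "vrel D \<sigma>m (jj - c1 - (n - a2 - 2 - b)) t v V"
    by (rule erel_D[OF E _ body_steps a(3) T3(4)[unfolded T4(6)] a(5)])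
       (use a(1) F1(1) F2(5) F3(1) T1(1) T2 T3(1) T4(5) jj_def in simp)
  then show "vrel D \<sigma>m (k - n1 - n) t v V"
    by (rule vrel_mono) (use a(1) F1(1) F2(5) F3(1) T1(1) T2 T3(1) T4(5) jj_def in simp)
qed


lemma main:
  assumes wf: "wf_decls D" and ms: "method_subst \<sigma>m" and br: "bindings_rel D \<sigma>m \<Delta> k \<sigma>F \<sigma>V"
    and dr: "decls_rel D k \<sigma>m"
  shows "fg_trans D \<Delta> e t E \<Longrightarrow> erel D \<sigma>m k t (fsubst \<sigma>F e) (tsubst \<sigma>V E)"
proof (induction rule: fg_trans.induct)
  case (tr_var x t)
  have "vrel D \<sigma>m k t (\<sigma>F x) (\<sigma>V (VX x))" using br tr_var unfolding bindings_rel_def by blast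
  then show ?case by (simp add: case_var)
next
  case (tr_struct s fs es Es)
  have "erel D \<sigma>m k (TS s) (SLit s (map (fsubst \<sigma>F) es)) (TApp (TCon (KS s)) (tuple (map (tsubst \<sigma>V) Es)))"
    by (rule case_struct[OF tr_struct(1)]) (use tr_struct(2,3,4) in simp_all)
  then show ?case by (simp add: tsubst_tuple)
next
  case (tr_access e s E fs i f)
  have xs: "distinct (map VAux [1..<length fs + 1])" by (rule distinct_VAux)
  have "VAux (i + 1) \<in> set (map VAux [1..<length fs + 1])"
    by (rule VAux_in_range) (use tr_access in simp_all)
  then have fvb: "fv (TVar (VAux (i + 1))) \<subseteq> set (map VAux [1..<length fs + 1])" by simp
  have "erel D \<sigma>m k (snd (fs ! i)) (Field (fsubst \<sigma>F e) f)
           (case_tup (tsubst \<sigma>V E) (KS s) (map VAux [1..<length fs + 1]) (TVar (VAux (i + 1))))"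
    by (rule case_access[OF wf]; use tr_access in blast)
  then show ?case by (subst tsubst_case_tup[OF xs fvb]) simp_all
next
  case (tr_call_struct m ps t s e E es Es)
  have "erel D \<sigma>m k t (Call (fsubst \<sigma>F e) m (map (fsubst \<sigma>F) es)) (TApp (TApp (TMeth m s) (tsubst \<sigma>V E)) (tuple (map (tsubst \<sigma>V) Es)))"
    by (rule case_call_struct[OF wf ms dr]) (use tr_call_struct in auto)
  then show ?case by (simp add: tsubst_tuple)
next
  case (tr_call_iface e tI E Ss j m ps t es Es)
  have Esfv: "\<forall>Ei \<in> set Es. fv Ei \<subseteq> VX ` dom \<Delta>"
  proof
    fix Ei assume "Ei \<in> set Es"
    then obtain i where i: "i < length Es" "Ei = Es ! i" by (metis in_set_conv_nth)
    then have "fg_trans D \<Delta> (es ! i) (snd (ps ! i)) Ei" using tr_call_iface by auto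
    then show "fv Ei \<subseteq> VX ` dom \<Delta>" by (rule trans_fv)
  qed
  then have FE: "\<forall>Ei \<in> set Es. fv Ei \<subseteq> range VX" by blast
  define A where "A = \<Union> (fv ` \<sigma>V ` \<Union> (fv ` set Es))"
  obtain z0 xs' where Z: "tsubst \<sigma>V (case_tup E (KI tI) (map VAux [1..<length Ss + 2]) (TApp (TApp (TVar (VAux (j + 2))) (TVar (VAux 1))) (tuple Es))) =
     TCase (tsubst \<sigma>V E) [((KI tI, [z0]), TCase (TVar z0) [((KTup (length Ss + 1), xs'),
        TApp (TApp (TVar (xs' ! (j + 1))) (TVar (xs' ! 0))) (tuple (map (tsubst \<sigma>V) Es)))])]"
     "length xs' = length Ss + 1" "distinct xs'" "z0 \<notin> A" "set xs' \<inter> A = {}"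
  proof -
    have jlt: "j < length Ss" using tr_call_iface by blast
    show ?thesis
      using tsubst_call_iface[OF FE jlt, of \<sigma>V E "KI tI"] unfolding A_def[symmetric]
      by (elim exE conjE) (rule that)
  qed
  have dbv: "dbind (\<sigma>V y)" if "y \<in> VX ` dom \<Delta>" for y
  proof -
    from that obtain x where x: "y = VX x" "x \<in> dom \<Delta>" by blast
    from x(2) obtain t0 where "\<Delta> x = Some t0" by blast
    note x(1) this
    then have "vrel D \<sigma>m k t0 (\<sigma>F x) (\<sigma>V y)" using br unfolding bindings_rel_def by simp
    then show ?thesis using vrel_vals tval_dbind by blast
  qed
  have SE: "\<forall>S \<in> set (map (tsubst \<sigma>V) Es). fv S \<subseteq> A \<and> dbind S"
  proof
    fix S assume "S \<in> set (map (tsubst \<sigma>V) Es)"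
    then have "S \<in> tsubst \<sigma>V ` set Es" by (simp only: set_map)
    then obtain Ei where Ei: "Ei \<in> set Es" "S = tsubst \<sigma>V Ei" by (rule imageE) (rule that)
    have f1: "fv S \<subseteq> \<Union> (fv ` \<sigma>V ` fv Ei)" using fv_tsubst Ei(2) by simp
    have f2: "fv Ei \<subseteq> \<Union> (fv ` set Es)" by (rule Union_upper) (rule imageI[OF Ei(1)])
    have f3: "\<Union> (fv ` \<sigma>V ` fv Ei) \<subseteq> A" unfolding A_def
      by (rule Union_mono, rule image_mono, rule image_mono[OF f2])
    have "fv S \<subseteq> A" using f1 f3 by (rule subset_trans)
    moreover have "dbind S" unfolding Ei(2) by (rule dbind_tsubst) (use Esfv Ei dbv in blast)
    ultimately show "fv S \<subseteq> A \<and> dbind S" by blast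
  qed
  have "erel D \<sigma>m k t (Call (fsubst \<sigma>F e) m (map (fsubst \<sigma>F) es))
     (TCase (tsubst \<sigma>V E) [((KI tI, [z0]), TCase (TVar z0) [((KTup (length Ss + 1), xs'),
        TApp (TApp (TVar (xs' ! (j + 1))) (TVar (xs' ! 0))) (tuple (map (tsubst \<sigma>V) Es)))])])"
    by (rule case_call_iface[OF wf ms _ _ _ _ _ _ _ Z(2,3,4,5) SE])
       (use tr_call_iface in auto)
  then show ?case using Z(1) by simp
next
  case (tr_sub e t E2 u E1)
  have cl: "fv E1 = {} \<and> dbind E1" by (rule subty_closed[OF tr_sub(2)])
  have eq: "tsubst \<sigma>V (TApp E1 E2) = TApp E1 (tsubst \<sigma>V E2)" using tsubst_closed cl by simp
  have "erel D \<sigma>m k u (fsubst \<sigma>F e) (TApp E1 (tsubst \<sigma>V E2))"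
    using tr_sub(2)
  proof (cases rule: subty_tr.cases)
    case (struct_iface tI Ss s)
    show ?thesis unfolding struct_iface(1,2)
      by (rule case_sub_struct[OF dr tr_sub(2)[unfolded struct_iface(1,2)] tr_sub(3)[unfolded struct_iface(1)]])
  next
    case (iface_iface tI Rs uI Ss \<pi>)
    show ?thesis unfolding iface_iface(1,2)
      by (rule case_sub_iface[OF wf tr_sub(2)[unfolded iface_iface(1,2)] tr_sub(3)[unfolded iface_iface(1)]])
  qed
  then show ?case unfolding eq .
next
  case (tr_assert e tI E2 u E1)
  have cl: "fv E1 = {} \<and> dbind E1" by (rule destr_closed[OF tr_assert(2)])
  have eq: "tsubst \<sigma>V (TApp E1 E2) = TApp E1 (tsubst \<sigma>V E2)" using tsubst_closed cl by simp
  show ?case unfolding eq fsubst.simps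
    by (rule case_assert[OF wf dr tr_assert(2) tr_assert(3)])
qed

theorem lemma4:
  fixes D :: decls and \<Delta> :: "vname \<rightharpoonup> ty" and e :: fexp and t :: ty and E :: texp
    and \<sigma>F :: "vname \<Rightarrow> fexp" and \<sigma>V :: "tlvar \<Rightarrow> texp" and \<sigma>m :: msub and k :: nat
  assumes "wf_decls D"
    and "method_subst \<sigma>m"
    and "fg_trans D \<Delta> e t E"
    and "bindings_rel D \<sigma>m \<Delta> k \<sigma>F \<sigma>V"
    and "decls_rel D k \<sigma>m"
  shows "erel D \<sigma>m k t (fsubst \<sigma>F e) (tsubst \<sigma>V E)"
  using main[OF assms(1,2,4,5) assms(3)] .


end
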